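(* Let $\mathcal{M}$ be a compact metric space and $T:\mathcal{M}\to\mathcal{M}$ a homeomorphism. Let $(\psi_i)_{i\ge1}$ be continuous functions $\mathcal{M}\to\mathbb{C}$ and for each $N$ let $\boldsymbol\psi=[\psi_1,\dots,\psi_N]^\top$ and $\mathcal{F}_N=\mathrm{span}\{\psi_1,\dots,\psi_N\}$. For each $N$ let sample points $x_1,\dots,x_N\in\mathcal{M}$ satisfy $x_{i+1}=T(x_i)$ for $i\in\{1,\dots,N-1\}$, put $y_i=T(x_i)$, assume the matrix $\frac1N\sum_{i=1}^N\boldsymbol\psi(x_i)\boldsymbol\psi(x_i)^{\mathsf H}$ is invertible, let $\hat\mu_N=\frac1N\sum_{i=1}^N\delta_{x_i}$, and let $\mathcal{K}_{N,N}:\mathcal{F}_N\to\mathcal{F}_N$ be the EDMD operator built from these $N$ functions and $N$ samples. Let $(\lambda_N)$ be a bounded sequence with $\lambda_N$ an eigenvalue of $\mathcal{K}_{N,N}$, let $\phi_N\in\mathcal{F}_N$ be an associated eigenfunction with $\|\phi_N\|_{C(\mathcal{M})}=\sup_{x\in\mathcal{M}}|\phi_N(x)|=1$, and let $\nu_N=\phi_N\,d\hat\mu_N$. Then there exist a subsequence $(N_i)_{i=1}^\infty$, complex-valued Borel measures $\nu,\mu$ on $\mathcal{M}$ and $\lambda\in\mathbb{C}$ such that $\nu_{N_i}\to\nu$ and $\hat\mu_{N_i}\to\mu$ weakly, $\lambda_{N_i}\to\lambda$, and \[ \int_{\mathcal{M}}h\circ T^{-1}\,d\nu=\lambda\int_{\mathcal{M}}h\,d\nu\quad\forall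 h\in C(\mathcal{M}). \] In addition, $\mu$ is invariant under $T$, and, assuming the Koopman operator $\mathcal{K}:L_2(\mu)\to L_2(\mu)$, $\mathcal{K}\phi=\phi\circ T$, is bounded with $L_2(\mu)$-adjoint $\mathcal{K}^\star$, \[ \int_{\mathcal{M}}\mathcal{K}^\star h\,d\nu=\lambda\int_{\mathcal{M}}h\,d\nu\quad\forall h\in C(\mathcal{M}). \] Furthermore, if $\lambda\neq0$, then \[ \int_{\mathcal{M}}h\circ T\,d\nu=\frac1\lambda\int_{\mathcal{M}}h\,d\nu\quad\forall h\in C(\mathcal{M}), \] i.e., if nonzero, $\nu$ is an eigenmeasure of the Perron–Frobenius operator $(\mathcal{P}\eta)(A)=\eta(T^{-1}(A))$ with eigenvalue $1/\lambda$.
   Context: EDMD operator: with $\boldsymbol\psi(\boldsymbol X)=[\boldsymbol\psi(x_1),\dots,\boldsymbol\psi(x_N)]$, $\boldsymbol\psi(\boldsymbol Y)=[\boldsymbol\psi(y_1),\dots,\boldsymbol\psi(y_N)]$, set $A=\boldsymbol\psi(\boldsymbol Y)\boldsymbol\psi(\boldsymbol X)^\dagger$ (Moore–Penrose pseudoinverse) and $\mathcal{K}_{N,N}(c^{\mathsf H}\boldsymbol\psi)=c^{\mathsf H}A\boldsymbol\psi$, $c\in\mathbb{C}^N$. $\nu_N=\phi_N\,d\hat\mu_N$ is the measure $h\mapsto\frac1N\sum_{i=1}^N h(x_i)\phi_N(x_i)$. Weak convergence of measures $\eta_i\to\eta$ means $\int f\,d\eta_i\to\int f\,d\eta$ for all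 continuous $f$. $\mu$ is invariant if $\int f\circ T\,d\mu=\int f\,d\mu$ for all continuous $f$. *)

theory Defs
  imports "HOL-Analysis.Analysis"
begin

type_synonym cmat = "nat \<Rightarrow> nat \<Rightarrow> complex"

definition meq :: "nat \<Rightarrow> nat \<Rightarrow> cmat \<Rightarrow> cmat \<Rightarrow> bool" where
  "meq m n A B \<longleftrightarrow> (\<forall>i<m. \<forall>j<n. A i j = B i j)"

definition mmul :: "nat \<Rightarrow> nat \<Rightarrow> nat \<Rightarrow> cmat \<Rightarrow> cmat \<Rightarrow> cmat" where
  "mmul m k n A B = (\<lambda>i j. if i < m \<and> j < n then (\<Sum>l<k. A i l * B l j) else 0)"

definition madj :: "nat \<Rightarrow> nat \<Rightarrow> cmat \<Rightarrow> cmat" where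
  "madj m n A = (\<lambda>i j. if i < n \<and> j < m then cnj (A j i) else 0)"

definition midentity :: cmat where
  "midentity = (\<lambda>i j. if i = j then 1 else 0)"

definition invertible_cmat :: "nat \<Rightarrow> cmat \<Rightarrow> bool" where
  "invertible_cmat n G \<longleftrightarrow>
     (\<exists>B. meq n n (mmul n n n G B) midentity \<and> meq n n (mmul n n n B G) midentity)"

text \<open>Moore--Penrose pseudoinverse of an m x n matrix A (an n x m matrix), via the Penrose
  conditions; unique, normalised to be zero outside its index range.\<close>
definition pinv :: "nat \<Rightarrow> nat \<Rightarrow> cmat \<Rightarrow> cmat" where
  "pinv m n A = (THE B. (\<forall>i j. \<not> (i < n \<and> j < m) \<longrightarrow> B i j = 0)
      \<and> meq m n (mmul m m n (mmul m n m A B) A) A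
      \<and> meq n m (mmul n n m (mmul n m n B A) B) B
      \<and> meq m m (madj m m (mmul m n m A B)) (mmul m n m A B)
      \<and> meq n n (madj n n (mmul n m n B A)) (mmul n m n B A))"

text \<open>Dictionary psi 1, ..., psi N; sample points xs 1, ..., xs N (1-based, as in the paper).
  psiX N: column j (0-based) is the vector psi(x_(j+1)); psiY likewise with y_i = T x_i.\<close>
definition psiX :: "(nat \<Rightarrow> 'a \<Rightarrow> complex) \<Rightarrow> (nat \<Rightarrow> 'a) \<Rightarrow> cmat" where
  "psiX psi xs = (\<lambda>i j. psi (Suc i) (xs (Suc j)))"

definition psiY :: "(nat \<Rightarrow> 'a \<Rightarrow> complex) \<Rightarrow> ('a \<Rightarrow> 'a) \<Rightarrow> (nat \<Rightarrow> 'a) \<Rightarrow> cmat" where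
  "psiY psi T xs = (\<lambda>i j. psi (Suc i) (T (xs (Suc j))))"

definition gram :: "(nat \<Rightarrow> 'a \<Rightarrow> complex) \<Rightarrow> (nat \<Rightarrow> 'a) \<Rightarrow> nat \<Rightarrow> cmat" where
  "gram psi xs N = (\<lambda>i j. (1 / of_nat N) *
      (\<Sum>l\<in>{1..N}. psi (Suc i) (xs l) * cnj (psi (Suc j) (xs l))))"

definition edmd_matrix :: "(nat \<Rightarrow> 'a \<Rightarrow> complex) \<Rightarrow> ('a \<Rightarrow> 'a) \<Rightarrow> (nat \<Rightarrow> 'a) \<Rightarrow> nat \<Rightarrow> cmat" where
  "edmd_matrix psi T xs N = mmul N N N (psiY psi T xs) (pinv N N (psiX psi xs))"

definition fspan :: "(nat \<Rightarrow> 'a \<Rightarrow> complex) \<Rightarrow> nat \<Rightarrow> (nat \<Rightarrow> complex) \<Rightarrow> 'a \<Rightarrow> complex" where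
  "fspan psi N c = (\<lambda>y. \<Sum>i<N. cnj (c i) * psi (Suc i) y)"

text \<open>EDMD operator: K_{N,N}(c^H psi) = c^H A psi.\<close>
definition edmd_op :: "(nat \<Rightarrow> 'a \<Rightarrow> complex) \<Rightarrow> ('a \<Rightarrow> 'a) \<Rightarrow> (nat \<Rightarrow> 'a) \<Rightarrow> nat
    \<Rightarrow> (nat \<Rightarrow> complex) \<Rightarrow> 'a \<Rightarrow> complex" where
  "edmd_op psi T xs N c = (\<lambda>y. \<Sum>i<N. \<Sum>j<N.
      cnj (c i) * edmd_matrix psi T xs N i j * psi (Suc j) y)"

text \<open>Integral of f against mu_hat_N = (1/N) sum_i delta_(x_i).\<close>
definition emp_mu :: "(nat \<Rightarrow> 'a) \<Rightarrow> nat \<Rightarrow> ('a \<Rightarrow> complex) \<Rightarrow> complex" where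
  "emp_mu xs N f = (1 / of_nat N) * (\<Sum>i\<in>{1..N}. f (xs i))"

text \<open>Integral of f against nu_N = phi_N d mu_hat_N.\<close>
definition emp_nu :: "(nat \<Rightarrow> 'a) \<Rightarrow> nat \<Rightarrow> ('a \<Rightarrow> complex) \<Rightarrow> ('a \<Rightarrow> complex) \<Rightarrow> complex" where
  "emp_nu xs N phi f = (1 / of_nat N) * (\<Sum>i\<in>{1..N}. f (xs i) * phi (xs i))"

text \<open>A complex Borel measure is represented as g d rho, with rho a finite (positive) Borel
  measure and g a rho-integrable complex density (every complex measure has this form,
  e.g. rho = |nu| and g = d nu / d |nu|).\<close>
definition complex_borel_measure :: "'a::topological_space measure \<Rightarrow> ('a \<Rightarrow> complex) \<Rightarrow> bool" where
  "complex_borel_measure rho g \<longleftrightarrow> sets rho = sets borel \<and> finite_measure rho \<and> integrable rho g"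

definition cbm_int :: "'a measure \<Rightarrow> ('a \<Rightarrow> complex) \<Rightarrow> ('a \<Rightarrow> complex) \<Rightarrow> complex" where
  "cbm_int rho g h = (LINT y|rho. h y * g y)"

definition L2 :: "'a measure \<Rightarrow> ('a \<Rightarrow> complex) \<Rightarrow> bool" where
  "L2 mu f \<longleftrightarrow> f \<in> borel_measurable mu \<and> integrable mu (\<lambda>y. (cmod (f y))\<^sup>2)"

definition koopman_bounded :: "'a measure \<Rightarrow> ('a \<Rightarrow> 'a) \<Rightarrow> bool" where
  "koopman_bounded mu T \<longleftrightarrow> (\<exists>C. \<forall>f. L2 mu f \<longrightarrow> L2 mu (f \<circ> T) \<and>
      (LINT y|mu. (cmod (f (T y)))\<^sup>2) \<le> C * (LINT y|mu. (cmod (f y))\<^sup>2))"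

definition koopman_adjoint :: "'a measure \<Rightarrow> ('a \<Rightarrow> 'a) \<Rightarrow> (('a \<Rightarrow> complex) \<Rightarrow> 'a \<Rightarrow> complex) \<Rightarrow> bool" where
  "koopman_adjoint mu T Ks \<longleftrightarrow> (\<forall>g. L2 mu g \<longrightarrow> L2 mu (Ks g)) \<and>
     (\<forall>f g. L2 mu f \<longrightarrow> L2 mu g \<longrightarrow>
        (LINT y|mu. f (T y) * cnj (g y)) = (LINT y|mu. f y * cnj (Ks g y)))"

end

theory Submission
  imports Defs "Jordan_Normal_Form.Determinant" "HOL-Library.Diagonal_Subsequence"
begin


definition tomat :: "nat \<Rightarrow> cmat \<Rightarrow> complex mat" where
  "tomat N A = mat N N (\<lambda>(i,j). A i j)"

lemma tomat_carrier[simp]: "tomat N A \<in> carrier_mat N N"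
  by (simp add: tomat_def)

lemma tomat_mmul: "tomat N (mmul N N N A B) = tomat N A * tomat N B"
  by (rule eq_matI) (auto simp: tomat_def mmul_def scalar_prod_def row_def col_def
      atLeast0LessThan intro!: sum.cong)

lemma tomat_one_left[simp]: "1\<^sub>m N * tomat N A = tomat N A"
  by (rule left_mult_one_mat[of _ N N]) simp

lemma tomat_one_right[simp]: "tomat N A * 1\<^sub>m N = tomat N A"
  by (rule right_mult_one_mat[of _ N N]) simp

lemma meq_tomat: "meq N N A B \<longleftrightarrow> tomat N A = tomat N B"
  unfolding meq_def tomat_def mat_eq_iff by auto

lemma tomat_id: "tomat N midentity = 1\<^sub>m N"
  by (rule eq_matI) (auto simp: tomat_def midentity_def)

lemma gram_right_inv:
  assumes N: "1 \<le> N" and inv: "invertible_cmat N (gram psi xs N)"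
  shows "\<exists>R. meq N N (mmul N N N (psiX psi xs) R) midentity"
proof -
  obtain B where B: "meq N N (mmul N N N (gram psi xs N) B) midentity"
    using inv unfolding invertible_cmat_def by blast
  define X where "X = psiX psi xs"
  define R where "R = (\<lambda>i j. (1 / of_nat N) * (\<Sum>k<N. cnj (X k i) * B k j))"
  have g: "gram psi xs N i k = (1 / of_nat N) * (\<Sum>l<N. X i l * cnj (X k l))" for i k
  proof -
    have "(\<Sum>l\<in>{1..N}. psi (Suc i) (xs l) * cnj (psi (Suc k) (xs l)))
        = (\<Sum>l<N. X i l * cnj (X k l))"
      unfolding X_def psiX_def
      by (rule sum.reindex_bij_witness[where i="\<lambda>l. Suc l" and j="\<lambda>l. l - 1"]) auto
    then show ?thesis unfolding gram_def by simp
  qed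
  have "mmul N N N X R i j = mmul N N N (gram psi xs N) B i j" for i j
  proof -
    have "(\<Sum>l<N. X i l * R l j) = (\<Sum>l<N. \<Sum>k<N. (1 / of_nat N) * (X i l * cnj (X k l)) * B k j)"
      unfolding R_def by (simp add: sum_distrib_left mult_ac)
    also have "\<dots> = (\<Sum>k<N. \<Sum>l<N. (1 / of_nat N) * (X i l * cnj (X k l)) * B k j)"
      by (rule sum.swap)
    also have "\<dots> = (\<Sum>k<N. gram psi xs N i k * B k j)"
      unfolding g by (simp add: sum_distrib_left sum_distrib_right)
    finally have "(\<Sum>l<N. X i l * R l j) = (\<Sum>k<N. gram psi xs N i k * B k j)" .
    then show ?thesis unfolding mmul_def by simp
  qed
  then have "mmul N N N X R = mmul N N N (gram psi xs N) B" by blast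
  with B have "meq N N (mmul N N N X R) midentity" by simp
  then show ?thesis unfolding X_def by blast
qed

lemma psiX_inv:
  assumes N: "1 \<le> N" and inv: "invertible_cmat N (gram psi xs N)"
  shows "tomat N (pinv N N (psiX psi xs)) * tomat N (psiX psi xs) = 1\<^sub>m N"
proof -
  define X where "X = psiX psi xs"
  obtain R where R: "meq N N (mmul N N N X R) midentity"
    using gram_right_inv[OF assms] unfolding X_def by blast
  have XR: "tomat N X * tomat N R = 1\<^sub>m N"
    using R by (simp add: meq_tomat tomat_mmul tomat_id)
  have RX: "tomat N R * tomat N X = 1\<^sub>m N"
    by (rule mat_mult_left_right_inverse[OF _ _ XR]) auto
  define R0 where "R0 = (\<lambda>i j. if i < N \<and> j < N then R i j else 0)"
  have tR0: "tomat N R0 = tomat N R" unfolding R0_def tomat_def by auto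
  define P where "P = (\<lambda>B. (\<forall>i j. \<not> (i < N \<and> j < N) \<longrightarrow> B i j = 0)
      \<and> meq N N (mmul N N N (mmul N N N X B) X) X
      \<and> meq N N (mmul N N N (mmul N N N B X) B) B
      \<and> meq N N (madj N N (mmul N N N X B)) (mmul N N N X B)
      \<and> meq N N (madj N N (mmul N N N B X)) (mmul N N N B X))"
  have madj_id: "meq N N (madj N N C) C" if "tomat N C = 1\<^sub>m N" for C
  proof -
    have "C i j = (if i = j then 1 else 0)" if "i < N" "j < N" for i j
      using arg_cong[OF \<open>tomat N C = 1\<^sub>m N\<close>, of "\<lambda>M. M $$ (i,j)"] that
      by (simp add: tomat_def)
    then show ?thesis unfolding meq_def madj_def by auto
  qed
  have PR0: "P R0"
    unfolding P_def
  proof (intro conjI)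
    show "\<forall>i j. \<not> (i < N \<and> j < N) \<longrightarrow> R0 i j = 0" unfolding R0_def by auto
    show "meq N N (mmul N N N (mmul N N N X R0) X) X"
      by (simp add: meq_tomat tomat_mmul tR0 XR)
    show "meq N N (mmul N N N (mmul N N N R0 X) R0) R0"
      by (simp add: meq_tomat tomat_mmul tR0 RX)
    show "meq N N (madj N N (mmul N N N X R0)) (mmul N N N X R0)"
      by (rule madj_id) (simp add: tomat_mmul tR0 XR)
    show "meq N N (madj N N (mmul N N N R0 X)) (mmul N N N R0 X)"
      by (rule madj_id) (simp add: tomat_mmul tR0 RX)
  qed
  have uniq: "B = R0" if "P B" for B
  proof -
    define r where "r = tomat N R"
    define x where "x = tomat N X"
    define b where "b = tomat N B"
    have c: "r \<in> carrier_mat N N" "x \<in> carrier_mat N N" "b \<in> carrier_mat N N"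
      unfolding r_def x_def b_def by simp_all
    have rx: "r * x = 1\<^sub>m N" and xr: "x * r = 1\<^sub>m N" using RX XR unfolding r_def x_def .
    have 1: "x * b * x = x"
      using that unfolding P_def x_def b_def by (simp add: meq_tomat tomat_mmul)
    have "b = (r * x) * b * (x * r)" using c by (simp add: rx xr)
    also have "\<dots> = r * (x * b * x) * r"
    proof -
      have xb: "x * b \<in> carrier_mat N N" by (rule mult_carrier_mat[OF c(2) c(3)])
      have xbx: "x * b * x \<in> carrier_mat N N" by (rule mult_carrier_mat[OF xb c(2)])
      have xr: "x * r \<in> carrier_mat N N" by (rule mult_carrier_mat[OF c(2) c(1)])
      have "(r * x) * b * (x * r) = r * (x * b) * (x * r)"
        by (simp only: assoc_mult_mat[OF c(1) c(2) c(3)])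
      also have "\<dots> = r * ((x * b) * (x * r))"
        by (rule assoc_mult_mat[OF c(1) xb xr])
      also have "\<dots> = r * ((x * b * x) * r)"
        by (simp only: assoc_mult_mat[OF xb c(2) c(1), symmetric])
      also have "\<dots> = r * (x * b * x) * r"
        by (rule assoc_mult_mat[OF c(1) xbx c(1), symmetric])
      finally show ?thesis .
    qed
    also have "\<dots> = r" using c by (simp add: 1 rx)
    finally have "tomat N B = tomat N R" unfolding r_def b_def .
    then have BR: "B i j = R i j" if "i < N" "j < N" for i j
    proof -
      have "tomat N B $$ (i,j) = tomat N R $$ (i,j)" by (simp only: \<open>tomat N B = tomat N R\<close>)
      then show ?thesis using that by (simp add: tomat_def)
    qed
    have "B i j = R0 i j" for i j
    proof (cases "i < N \<and> j < N")
      case True then show ?thesis using BR unfolding R0_def by simp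
    next
      case False
      then have "B i j = 0" using \<open>P B\<close> unfolding P_def by blast
      then show ?thesis using False unfolding R0_def by auto
    qed
    then show ?thesis by blast
  qed
  have "pinv N N X = (THE B. P B)"
    unfolding pinv_def P_def by (rule refl)
  also have "\<dots> = R0"
    by (rule the_equality[of P, OF PR0 uniq])
  finally have "pinv N N X = R0" .
  then show ?thesis unfolding X_def[symmetric] using RX tR0 by simp
qed

lemma edmd_step:
  assumes N: "1 \<le> N" and inv: "invertible_cmat N (gram psi xs N)"
    and phi: "phi = fspan psi N c"
    and eig: "edmd_op psi T xs N c = (\<lambda>y. lam * phi y)"
    and l: "1 \<le> l" "l \<le> N"
  shows "phi (T (xs l)) = lam * phi (xs l)"
proof -
  define X where "X = psiX psi xs"
  define Y where "Y = psiY psi T xs"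
  define A where "A = edmd_matrix psi T xs N"
  have PX: "tomat N (pinv N N X) * tomat N X = 1\<^sub>m N"
    using psiX_inv[OF N inv] unfolding X_def .
  have cY: "tomat N Y \<in> carrier_mat N N" "tomat N (pinv N N X) \<in> carrier_mat N N"
     "tomat N X \<in> carrier_mat N N" by simp_all
  have "tomat N Y = tomat N Y * (tomat N (pinv N N X) * tomat N X)"
    using PX by simp
  also have "\<dots> = tomat N Y * tomat N (pinv N N X) * tomat N X"
    by (rule assoc_mult_mat[OF cY, symmetric])
  also have "\<dots> = tomat N A * tomat N X"
    unfolding A_def edmd_matrix_def X_def[symmetric] Y_def[symmetric] tomat_mmul ..
  finally have YAX: "tomat N Y = tomat N (mmul N N N A X)" by (simp add: tomat_mmul)
  have Yent: "Y i m = (\<Sum>j<N. A i j * X j m)" if "i < N" "m < N" for i m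
  proof -
    have "tomat N Y $$ (i,m) = tomat N (mmul N N N A X) $$ (i,m)" by (simp only: YAX)
    then show ?thesis using that by (simp add: tomat_def mmul_def)
  qed
  obtain m where m: "l = Suc m" "m < N" using l by (cases l) auto
  have "phi (T (xs l)) = (\<Sum>i<N. cnj (c i) * Y i m)"
    unfolding phi fspan_def Y_def psiY_def m by simp
  also have "\<dots> = (\<Sum>i<N. \<Sum>j<N. cnj (c i) * A i j * psi (Suc j) (xs l))"
    using Yent m by (simp add: sum_distrib_left X_def psiX_def mult_ac)
  also have "\<dots> = edmd_op psi T xs N c (xs l)"
    unfolding edmd_op_def A_def by simp
  also have "\<dots> = lam * phi (xs l)" using eig by simp
  finally show ?thesis .
qed


definition rad :: "nat \<Rightarrow> real" where "rad k = (1/2)^k"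

lemma rad_pos: "0 < rad k" by (simp add: rad_def)

definition cs :: "nat \<Rightarrow> 'a::metric_space list" where
  "cs k = (SOME xs. \<forall>y. \<exists>c\<in>set xs. dist c y < rad k)"

lemma finite_net:
  assumes cpt: "compact (UNIV::'a::metric_space set)" and e: "0 < e"
  shows "\<exists>xs::'a list. \<forall>y. \<exists>c\<in>set xs. dist c y < e"
proof -
  have cov: "UNIV \<subseteq> \<Union> ((\<lambda>c. ball c e) ` UNIV)" using e by auto
  obtain C where C: "C \<subseteq> UNIV" "finite C" "UNIV \<subseteq> \<Union> ((\<lambda>c::'a. ball c e) ` C)"
    by (rule compactE_image[OF cpt _ cov]) simp
  obtain xs where xs: "set xs = C" using finite_list[OF C(2)] by blast
  show ?thesis
  proof (intro exI allI)
    fix y :: 'a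
    have "y \<in> \<Union> ((\<lambda>c::'a. ball c e) ` C)" using C(3) by blast
    then obtain c where "c \<in> C" "y \<in> ball c e" by blast
    then show "\<exists>c\<in>set xs. dist c y < e" using xs by auto
  qed
qed

lemma cs:
  assumes cpt: "compact (UNIV::'a::metric_space set)"
  shows "\<exists>c\<in>set (cs k :: 'a list). dist c y < rad k"
proof -
  have "\<exists>xs::'a list. \<forall>y. \<exists>c\<in>set xs. dist c y < rad k"
    by (rule finite_net[OF cpt rad_pos])
  then have "\<forall>y. \<exists>c\<in>set (cs k :: 'a list). dist c y < rad k"
    unfolding cs_def by (rule someI_ex)
  then show ?thesis by blast
qed

definition bidx :: "nat \<Rightarrow> 'a::metric_space \<Rightarrow> nat" where
  "bidx k y = (LEAST j. j < length (cs k :: 'a list) \<and> dist (cs k ! j) y < rad k)"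

lemma bidx:
  assumes cpt: "compact (UNIV::'a::metric_space set)"
  shows "bidx k y < length (cs k :: 'a list) \<and> dist (cs k ! bidx k y) (y::'a) < rad k"
proof -
  obtain c where c: "c \<in> set (cs k :: 'a list)" "dist c y < rad k" using cs[OF cpt] by blast
  then obtain j where "j < length (cs k :: 'a list)" "cs k ! j = c" by (auto simp: in_set_conv_nth)
  then have ex: "\<exists>j. j < length (cs k :: 'a list) \<and> dist (cs k ! j) y < rad k" using c by blast
  show ?thesis unfolding bidx_def by (rule LeastI_ex[OF ex])
qed

primrec sig :: "nat \<Rightarrow> 'a::metric_space \<Rightarrow> nat list" where
  "sig 0 y = []"
| "sig (Suc k) y = bidx k y # sig k y"

lemma length_sig[simp]: "length (sig k y) = k"
  by (induction k) auto

lemma drop_sig: "drop d (sig (k + d) y) = sig k y"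
  by (induction d) (auto simp: drop_Suc)

lemma sig_dist:
  assumes cpt: "compact (UNIV::'a::metric_space set)"
    and eq: "sig (Suc k) y = sig (Suc k) (z::'a)"
  shows "dist y z < 2 * rad k"
proof -
  have "bidx k y = bidx k z" using eq by simp
  moreover have "dist (cs k ! bidx k y) y < rad k" "dist (cs k ! bidx k z) z < rad k"
    using bidx[OF cpt] by blast+
  ultimately have "dist (cs k ! bidx k y) y < rad k" "dist (cs k ! bidx k y) z < rad k" by simp_all
  moreover have "dist y z \<le> dist (cs k ! bidx k y) y + dist (cs k ! bidx k y) z"
    by (rule dist_triangle3)
  ultimately show ?thesis by simp
qed

lemma finite_sig_range:
  assumes cpt: "compact (UNIV::'a::metric_space set)"
  shows "finite (range (sig k :: 'a \<Rightarrow> nat list))"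
proof (induction k)
  case 0 then show ?case by simp
next
  case (Suc k)
  have "range (sig (Suc k) :: 'a \<Rightarrow> nat list)
      \<subseteq> (\<lambda>(j,l). j # l) ` ({..<length (cs k :: 'a list)} \<times> range (sig k :: 'a \<Rightarrow> nat list))"
  proof
    fix l assume "l \<in> range (sig (Suc k) :: 'a \<Rightarrow> nat list)"
    then obtain y :: 'a where y: "l = sig (Suc k) y" by blast
    have "bidx k y < length (cs k :: 'a list)" using bidx[OF cpt] by blast
    then have "(bidx k y, sig k y) \<in> {..<length (cs k :: 'a list)} \<times> range (sig k :: 'a \<Rightarrow> nat list)"
      by simp
    then show "l \<in> (\<lambda>(j,l). j # l) ` ({..<length (cs k :: 'a list)} \<times> range (sig k :: 'a \<Rightarrow> nat list))"
      unfolding y by force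
  qed
  moreover have "finite ((\<lambda>(j,l). j # l) ` ({..<length (cs k :: 'a list)} \<times> range (sig k :: 'a \<Rightarrow> nat list)))"
    using Suc by auto
  ultimately show ?case by (rule finite_subset)
qed


locale emp =
  fixes p :: "nat \<Rightarrow> nat \<Rightarrow> 'a::metric_space" and w :: "nat \<Rightarrow> nat \<Rightarrow> real" and K :: "nat \<Rightarrow> nat"
  assumes cpt: "compact (UNIV::'a set)"
    and wpos: "\<And>n i. 0 \<le> w n i"
    and wsum: "\<And>n. (\<Sum>i<K n. w n i) \<le> 1"
begin

definition nc :: "nat \<Rightarrow> nat" where "nc k = length (cs k :: 'a list)"

lemma bidx': "bidx k (y::'a) < nc k" "dist (cs k ! bidx k y) y < rad k"
  using bidx[OF cpt] unfolding nc_def by blast+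

lemma nc_pos: "0 < nc k"
  using bidx'(1)[of k undefined] by simp

definition mN :: "nat \<Rightarrow> nat list \<Rightarrow> real" where
  "mN n l = (\<Sum>i<K n. if sig (length l) (p n i) = l then w n i else 0)"

lemma mN_nonneg: "0 \<le> mN n l"
  unfolding mN_def by (rule sum_nonneg) (simp add: wpos)

lemma mN_le1: "mN n l \<le> 1"
proof -
  have "mN n l \<le> (\<Sum>i<K n. w n i)" unfolding mN_def
    by (rule sum_mono) (simp add: wpos)
  then show ?thesis using wsum[of n] by simp
qed

lemma mN_add: "mN n l = (\<Sum>j<nc (length l). mN n (j # l))"
proof -
  define k where "k = length l"
  have "(\<Sum>j<nc k. mN n (j # l)) = (\<Sum>j<nc k. \<Sum>i<K n. if sig (Suc k) (p n i) = j # l then w n i else 0)"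
    unfolding mN_def k_def by simp
  also have "\<dots> = (\<Sum>i<K n. \<Sum>j<nc k. if sig (Suc k) (p n i) = j # l then w n i else 0)"
    by (rule sum.swap)
  also have "\<dots> = (\<Sum>i<K n. if sig k (p n i) = l then w n i else 0)"
  proof (rule sum.cong[OF refl])
    fix i
    have "(\<Sum>j<nc k. if sig (Suc k) (p n i) = j # l then w n i else 0)
        = (\<Sum>j<nc k. if j = bidx k (p n i) then (if sig k (p n i) = l then w n i else 0) else 0)"
      by (rule sum.cong) auto
    also have "\<dots> = (if sig k (p n i) = l then w n i else 0)"
      using bidx'(1)[of k "p n i"] by (simp add: sum.delta)
    finally show "(\<Sum>j<nc k. if sig (Suc k) (p n i) = j # l then w n i else 0)
        = (if sig k (p n i) = l then w n i else 0)" .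
  qed
  also have "\<dots> = mN n l" unfolding mN_def k_def by simp
  finally show ?thesis unfolding k_def by simp
qed

definition PP :: "nat \<Rightarrow> (nat \<Rightarrow> nat) \<Rightarrow> bool" where
  "PP j s = convergent (\<lambda>k. mN (s k) (from_nat j))"

lemma subseqs_PP: "subseqs PP"
proof
  fix j and s :: "nat \<Rightarrow> nat" assume "strict_mono s"
  have "seq_compact {0..1::real}" by (rule compact_imp_seq_compact) simp
  moreover have "\<forall>k. mN (s k) (from_nat j) \<in> {0..1}" using mN_nonneg mN_le1 by simp
  ultimately obtain L r where "strict_mono r" "((\<lambda>k. mN (s k) (from_nat j)) \<circ> r) \<longlonglongrightarrow> L"
    by (rule seq_compactE)
  then show "\<exists>r'. strict_mono r' \<and> PP j (s \<circ> r')"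
    unfolding PP_def convergent_def by (auto simp: o_def)
qed

definition rr :: "nat \<Rightarrow> nat" where "rr = subseqs.diagseq PP"

lemma rr_mono: "strict_mono rr"
  unfolding rr_def by (rule subseqs.subseq_diagseq[OF subseqs_PP])

lemma rr_conv: "convergent (\<lambda>i. mN (rr i) l)"
proof -
  define j where "j = to_nat l"
  have "PP j (subseqs.diagseq PP \<circ> (+) (Suc j))"
  proof (rule subseqs.diagseq_holds[OF subseqs_PP])
    fix r s n assume "strict_mono (r::nat\<Rightarrow>nat)" "PP n s"
    then obtain L where L: "(\<lambda>k. mN (s k) (from_nat n)) \<longlonglongrightarrow> L"
      unfolding PP_def convergent_def by blast
    have "((\<lambda>k. mN (s k) (from_nat n)) \<circ> r) \<longlonglongrightarrow> L"
      by (rule LIMSEQ_subseq_LIMSEQ[OF L \<open>strict_mono r\<close>])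
    then show "PP n (s \<circ> r)"
      unfolding PP_def convergent_def by (auto simp: o_def)
  qed
  then have "convergent (\<lambda>i. mN (rr (i + Suc j)) l)"
    unfolding PP_def rr_def j_def by (simp add: o_def add.commute)
  then obtain L where "(\<lambda>i. mN (rr (i + Suc j)) l) \<longlonglongrightarrow> L" unfolding convergent_def by blast
  then have "(\<lambda>i. mN (rr i) l) \<longlonglongrightarrow> L" by (rule LIMSEQ_offset)
  then show ?thesis unfolding convergent_def by blast
qed

definition m :: "nat list \<Rightarrow> real" where "m l = lim (\<lambda>i. mN (rr i) l)"

lemma m_lim: "(\<lambda>i. mN (rr i) l) \<longlonglongrightarrow> m l"
  unfolding m_def using rr_conv by (simp add: convergent_LIMSEQ_iff)

lemma m_nonneg: "0 \<le> m l"
  by (rule LIMSEQ_le_const[OF m_lim]) (simp add: mN_nonneg)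

lemma m_le1: "m l \<le> 1"
  by (rule LIMSEQ_le_const2[OF m_lim]) (simp add: mN_le1)

lemma m_add: "m l = (\<Sum>j<nc (length l). m (j # l))"
proof -
  have "(\<lambda>i. \<Sum>j<nc (length l). mN (rr i) (j # l)) \<longlonglongrightarrow> (\<Sum>j<nc (length l). m (j # l))"
    by (rule tendsto_sum) (rule m_lim)
  then have "(\<lambda>i. mN (rr i) l) \<longlonglongrightarrow> (\<Sum>j<nc (length l). m (j # l))"
    by (simp add: mN_add[symmetric])
  then show ?thesis using m_lim LIMSEQ_unique by blast
qed

lemma m_pos_ne:
  assumes "0 < m l" shows "\<exists>y::'a. sig (length l) y = l"
proof (rule ccontr)
  assume "\<not> ?thesis"
  then have "mN n l = 0" for n unfolding mN_def by auto
  then have "m l = 0" using m_lim[of l] LIMSEQ_unique[OF _ tendsto_const[of 0]] by simp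
  then show False using assms by simp
qed

end


context emp begin

primrec aL :: "nat list \<Rightarrow> real" where
  "aL [] = 0"
| "aL (j # l) = aL l + (\<Sum>i<j. m (i # l))"

definition m0 :: real where "m0 = m []"

primrec nd :: "nat \<Rightarrow> real \<Rightarrow> nat list" where
  "nd 0 t = []"
| "nd (Suc k) t = (LEAST j. t < aL (j # nd k t) + m (j # nd k t)) # nd k t"

lemma length_nd[simp]: "length (nd k t) = k"
  by (induction k) auto

lemma drop_nd: "drop d (nd (k + d) t) = nd k t"
  by (induction d) (auto simp: drop_Suc)

lemma aL_m_Suc: "aL (j # l) + m (j # l) = aL l + (\<Sum>i<Suc j. m (i # l))"
  by simp

lemma child_bounds:
  assumes "j < nc (length l)"
  shows "aL l \<le> aL (j # l)" "aL (j # l) + m (j # l) \<le> aL l + m l"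
proof -
  show "aL l \<le> aL (j # l)" by (simp add: sum_nonneg m_nonneg)
  have "(\<Sum>i<Suc j. m (i # l)) \<le> (\<Sum>i<nc (length l). m (i # l))"
    by (rule sum_mono2) (use assms in \<open>auto simp: m_nonneg\<close>)
  then show "aL (j # l) + m (j # l) \<le> aL l + m l"
    using m_add[of l] by simp
qed

lemma nd_inv:
  assumes t: "0 \<le> t" "t < m0"
  shows "aL (nd k t) \<le> t \<and> t < aL (nd k t) + m (nd k t)"
proof (induction k)
  case 0 then show ?case using t by (simp add: m0_def)
next
  case (Suc k)
  define l where "l = nd k t"
  have len: "length l = k" unfolding l_def by simp
  have IH: "aL l \<le> t" "t < aL l + m l" using Suc unfolding l_def by auto
  define P where "P = (\<lambda>j. t < aL (j # l) + m (j # l))"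
  have ex: "P (nc k - 1)"
  proof -
    have "Suc (nc k - 1) = nc k" using nc_pos[of k] by simp
    then have "aL ((nc k - 1) # l) + m ((nc k - 1) # l) = aL l + m l"
      using m_add[of l] len by (simp only: aL_m_Suc)
    then show ?thesis unfolding P_def using IH by simp
  qed
  define j0 where "j0 = (LEAST j. P j)"
  have j0: "P j0" unfolding j0_def by (rule LeastI[of P, OF ex])
  have low: "aL (j0 # l) \<le> t"
  proof (cases j0)
    case 0 then show ?thesis using IH by simp
  next
    case (Suc j')
    have "\<not> P j'" using not_less_Least[of j' P] Suc unfolding j0_def by simp
    then have "aL (j' # l) + m (j' # l) \<le> t" unfolding P_def by simp
    then show ?thesis unfolding Suc by (simp only: aL_m_Suc) simp
  qed
  have eq: "nd (Suc k) t = j0 # l" unfolding j0_def P_def l_def by (simp only: nd.simps)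
  from low j0[unfolded P_def] show ?case unfolding eq by (rule conjI)
qed

lemma nd_lt:
  assumes t: "0 \<le> t" "t < m0"
  shows "hd (nd (Suc k) t) < nc k"
proof -
  define l where "l = nd k t"
  have len: "length l = k" unfolding l_def by simp
  have IH: "aL l \<le> t" "t < aL l + m l" using nd_inv[OF t, of k] unfolding l_def by auto
  define P where "P = (\<lambda>j. t < aL (j # l) + m (j # l))"
  have ex: "P (nc k - 1)"
  proof -
    have "Suc (nc k - 1) = nc k" using nc_pos[of k] by simp
    then have "aL ((nc k - 1) # l) + m ((nc k - 1) # l) = aL l + m l"
      using m_add[of l] len by (simp only: aL_m_Suc)
    then show ?thesis unfolding P_def using IH by simp
  qed
  have le: "(LEAST j. P j) \<le> nc k - 1" by (rule Least_le[of P, OF ex])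
  have "hd (nd (Suc k) t) = (LEAST j. P j)" unfolding P_def l_def by (simp only: nd.simps list.sel(1))
  then show ?thesis using nc_pos[of k] le by arith
qed

lemma sig_range_Suc:
  assumes "l \<in> range (sig (Suc k) :: 'a \<Rightarrow> nat list)"
  obtains j l' where "l = j # l'" "j < nc k" "l' \<in> range (sig k :: 'a \<Rightarrow> nat list)"
proof -
  obtain y :: 'a where "l = sig (Suc k) y" using assms by blast
  then show ?thesis using that[of "bidx k y" "sig k y"] bidx'(1)[of k y] by simp
qed

lemma nd_unique:
  assumes "l \<in> range (sig k :: 'a \<Rightarrow> nat list)" "aL l \<le> t" "t < aL l + m l"
  shows "nd k t = l"
  using assms
proof (induction k arbitrary: l)
  case 0 then show ?case by auto
next
  case (Suc k)
  obtain j l' where l: "l = j # l'" "j < nc k" "l' \<in> range (sig k :: 'a \<Rightarrow> nat list)"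
    using sig_range_Suc[OF Suc.prems(1)] by blast
  have len: "length l' = k" using l(3) by auto
  have cb: "aL l' \<le> aL (j # l')" "aL (j # l') + m (j # l') \<le> aL l' + m l'"
    using child_bounds[of j l'] l(2) len by auto
  have ndk: "nd k t = l'"
    using Suc.IH[OF l(3)] Suc.prems(2,3) cb unfolding l(1) by simp
  have "(LEAST i. t < aL (i # l') + m (i # l')) = j"
  proof (rule Least_equality)
    show "t < aL (j # l') + m (j # l')" using Suc.prems(3) l(1) by simp
  next
    fix i assume i: "t < aL (i # l') + m (i # l')"
    show "j \<le> i"
    proof (rule ccontr)
      assume "\<not> j \<le> i"
      then have "Suc i \<le> j" by simp
      have "(\<Sum>x<Suc i. m (x # l')) \<le> (\<Sum>x<j. m (x # l'))"
        by (rule sum_mono2) (use \<open>Suc i \<le> j\<close> in \<open>auto simp: m_nonneg\<close>)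
      then have "aL (i # l') + m (i # l') \<le> aL (j # l')"
        by (simp only: aL_m_Suc) simp
      then show False using i Suc.prems(2) l(1) by simp
    qed
  qed
  then show ?case using ndk l(1) by simp
qed

lemma nest:
  assumes "l \<in> range (sig k :: 'a \<Rightarrow> nat list)"
  shows "0 \<le> aL l \<and> aL l + m l \<le> m0"
  using assms
proof (induction k arbitrary: l)
  case 0 then show ?case by (auto simp: m0_def)
next
  case (Suc k)
  obtain j l' where l: "l = j # l'" "j < nc k" "l' \<in> range (sig k :: 'a \<Rightarrow> nat list)"
    using sig_range_Suc[OF Suc.prems(1)] by blast
  have len: "length l' = k" using l(3) by auto
  have cb: "aL l' \<le> aL (j # l')" "aL (j # l') + m (j # l') \<le> aL l' + m l'"
    using child_bounds[of j l'] l(2) len by auto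
  then show ?case using Suc.IH[OF l(3)] l(1) by simp
qed

lemma nd_range:
  assumes t: "0 \<le> t" "t < m0"
  shows "nd k t \<in> range (sig k :: 'a \<Rightarrow> nat list)"
proof -
  have "0 < m (nd k t)" using nd_inv[OF t, of k] by simp
  then obtain y :: 'a where "sig (length (nd k t)) y = nd k t" using m_pos_ne by blast
  then have "nd k t = sig k y" by simp
  then show ?thesis by (rule range_eqI)
qed

lemma nd_iff:
  assumes t: "0 \<le> t" "t < m0" and l: "l \<in> range (sig k :: 'a \<Rightarrow> nat list)"
  shows "nd k t = l \<longleftrightarrow> aL l \<le> t \<and> t < aL l + m l"
proof
  assume "nd k t = l" then show "aL l \<le> t \<and> t < aL l + m l" using nd_inv[OF t, of k] by simp
next
  assume "aL l \<le> t \<and> t < aL l + m l" then show "nd k t = l" using nd_unique[OF l] by simp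
qed

lemma nd_meas: "(\<lambda>t. nd k t) \<in> borel \<rightarrow>\<^sub>M count_space UNIV"
proof (induction k)
  case 0 show ?case unfolding nd.simps by (rule measurable_const) simp
next
  case (Suc k)
  have gen: "(\<lambda>t::real. LEAST j::nat. t < f j) \<in> borel \<rightarrow>\<^sub>M count_space UNIV" for f
    by (rule measurable_Least) measurable
  have G: "(\<lambda>t. (LEAST j. t < aL (j # l) + m (j # l)) # l) \<in> borel \<rightarrow>\<^sub>M count_space UNIV" for l
  proof -
    have A: "(\<lambda>t::real. LEAST j. t < aL (j # l) + m (j # l)) \<in> borel \<rightarrow>\<^sub>M count_space UNIV"
      by (rule gen)
    have B: "(\<lambda>j::nat. j # l) \<in> count_space UNIV \<rightarrow>\<^sub>M count_space UNIV"
      by (rule measurable_count_space)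
    show ?thesis by (rule measurable_compose[OF A B])
  qed
  show ?case unfolding nd.simps by (rule measurable_compose_countable[OF G Suc])
qed

definition c :: "nat list \<Rightarrow> 'a" where "c l = (SOME y. sig (length l) y = l)"

lemma c_sig: "\<exists>y::'a. sig (length l) y = l \<Longrightarrow> sig (length l) (c l) = l"
  unfolding c_def by (rule someI_ex)

definition Phik :: "nat \<Rightarrow> real \<Rightarrow> 'a" where "Phik k t = c (nd k t)"

lemma Phik_meas: "Phik k \<in> borel_measurable borel"
proof -
  have "(\<lambda>t. (\<lambda>l t. c l) (nd k t) t) \<in> borel \<rightarrow>\<^sub>M borel"
    by (rule measurable_compose_countable[OF _ nd_meas]) simp
  then show ?thesis unfolding Phik_def by simp
qed

lemma sig_Phik:
  assumes t: "0 \<le> t" "t < m0" and kj: "k \<le> j"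
  shows "sig k (Phik j t) = nd k t"
proof -
  obtain y :: 'a where "nd j t = sig j y" using nd_range[OF t, of j] by blast
  then have "\<exists>y::'a. sig (length (nd j t)) y = nd j t" by auto
  then have "sig (length (nd j t)) (c (nd j t)) = nd j t" by (rule c_sig)
  then have s: "sig j (Phik j t) = nd j t" unfolding Phik_def by simp
  have j: "j = k + (j - k)" using kj by simp
  have "sig k (Phik j t) = drop (j - k) (sig (k + (j - k)) (Phik j t))" by (rule drop_sig[symmetric])
  also have "\<dots> = drop (j - k) (nd (k + (j - k)) t)" using s j by simp
  also have "\<dots> = nd k t" by (rule drop_nd)
  finally show ?thesis .
qed

lemma Phik_close:
  assumes t: "0 \<le> t" "t < m0" and kj: "Suc k \<le> j"
  shows "dist (Phik j t) (Phik (Suc k) t) < 2 * rad k"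
proof -
  have "sig (Suc k) (Phik j t) = sig (Suc k) (Phik (Suc k) t)"
    using sig_Phik[OF t kj] sig_Phik[OF t order_refl] by simp
  then show ?thesis by (rule sig_dist[OF cpt])
qed

lemma rad_small: "0 < e \<Longrightarrow> \<exists>k. rad k < e"
  unfolding rad_def using real_arch_pow_inv[of e "1/2"] by simp

lemma Phik_Cauchy:
  assumes t: "0 \<le> t" "t < m0"
  shows "Cauchy (\<lambda>j. Phik j t)"
proof (rule metric_CauchyI)
  fix e :: real assume e: "0 < e"
  obtain k where k: "rad k < e / 4" using rad_small[of "e/4"] e by auto
  show "\<exists>M. \<forall>i\<ge>M. \<forall>j\<ge>M. dist (Phik i t) (Phik j t) < e"
  proof (intro exI allI impI)
    fix i j assume "Suc k \<le> i" "Suc k \<le> j"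
    then have "dist (Phik i t) (Phik (Suc k) t) < 2 * rad k" "dist (Phik j t) (Phik (Suc k) t) < 2 * rad k"
      using Phik_close[OF t] by blast+
    moreover have "dist (Phik i t) (Phik j t) \<le> dist (Phik i t) (Phik (Suc k) t) + dist (Phik j t) (Phik (Suc k) t)"
      by (rule dist_triangle2)
    ultimately show "dist (Phik i t) (Phik j t) < e" using k by simp
  qed
qed

definition Phi :: "real \<Rightarrow> 'a" where "Phi t = lim (\<lambda>j. Phik j t)"

lemma Phi_lim:
  assumes t: "0 \<le> t" "t < m0"
  shows "(\<lambda>j. Phik j t) \<longlonglongrightarrow> Phi t"
proof -
  have "complete (UNIV::'a set)" by (rule compact_imp_complete[OF cpt])
  then have "\<exists>L\<in>UNIV. (\<lambda>j. Phik j t) \<longlonglongrightarrow> L"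
    unfolding complete_def using Phik_Cauchy[OF t] by simp
  then have "convergent (\<lambda>j. Phik j t)" unfolding convergent_def by simp
  then show ?thesis unfolding Phi_def by (simp add: convergent_LIMSEQ_iff)
qed

lemma Phi_close:
  assumes t: "0 \<le> t" "t < m0"
  shows "dist (Phi t) (Phik (Suc k) t) \<le> 2 * rad k"
proof -
  have "(\<lambda>j. dist (Phik j t) (Phik (Suc k) t)) \<longlonglongrightarrow> dist (Phi t) (Phik (Suc k) t)"
    by (intro tendsto_intros Phi_lim[OF t])
  moreover have "\<forall>j\<ge>Suc k. dist (Phik j t) (Phik (Suc k) t) \<le> 2 * rad k"
    using Phik_close[OF t] by (simp add: less_imp_le)
  then have "\<exists>N. \<forall>j\<ge>N. dist (Phik j t) (Phik (Suc k) t) \<le> 2 * rad k" by (rule exI)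
  ultimately show ?thesis by (rule LIMSEQ_le_const2)
qed

definition M0 :: "real measure" where "M0 = restrict_space lborel {0..<m0}"

lemma space_M0[simp]: "space M0 = {0..<m0}" by (simp add: M0_def)

lemma Phi_meas: "Phi \<in> borel_measurable M0"
proof (rule borel_measurable_LIMSEQ_metric[of "\<lambda>j. Phik j"])
  fix j show "Phik j \<in> borel_measurable M0"
    unfolding M0_def using Phik_meas[of j] by (intro measurable_restrict_space1) simp
next
  fix t assume "t \<in> space M0"
  then show "(\<lambda>j. Phik j t) \<longlonglongrightarrow> Phi t" using Phi_lim by simp
qed

end


context emp begin

lemma m0_nonneg: "0 \<le> m0" unfolding m0_def by (rule m_nonneg)

lemma Omega_sets: "{0..<m0} \<inter> space lborel \<in> sets lborel" by simp

lemma emeasure_M0: "emeasure M0 (space M0) = ennreal m0"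
  unfolding M0_def space_M0[unfolded M0_def]
  using emeasure_restrict_space[OF Omega_sets, of "{0..<m0}"] m0_nonneg by simp

lemma finite_M0: "finite_measure M0"
  by (rule finite_measureI) (use emeasure_M0 in simp)

lemma measure_M0_space: "measure M0 (space M0) = m0"
  using emeasure_M0 m0_nonneg by (simp add: measure_def)

lemma sets_M0: "A \<subseteq> {0..<m0} \<Longrightarrow> A \<in> sets borel \<Longrightarrow> A \<in> sets M0"
  unfolding M0_def using sets_restrict_space_iff[OF Omega_sets] by simp

lemma measure_M0: "A \<subseteq> {0..<m0} \<Longrightarrow> measure M0 A = measure lborel A"
  unfolding M0_def by (rule measure_restrict_space[OF Omega_sets])

definition mu :: "'a measure" where "mu = distr M0 borel Phi"

lemma sets_mu: "sets mu = sets borel" unfolding mu_def by simp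

lemma finite_mu: "finite_measure mu"
  unfolding mu_def by (rule finite_measure.finite_measure_distr[OF finite_M0 Phi_meas])

lemma int_level:
  fixes F :: "nat list \<Rightarrow> real"
  shows "(LINT t|M0. F (nd k t)) = (\<Sum>l\<in>range (sig k :: 'a \<Rightarrow> nat list). m l * F l)"
proof -
  define R where "R = range (sig k :: 'a \<Rightarrow> nat list)"
  have finR: "finite R" unfolding R_def by (rule finite_sig_range[OF cpt])
  define I where "I = (\<lambda>l. {aL l..<aL l + m l})"
  have IR: "I l \<subseteq> {0..<m0}" if "l \<in> R" for l
    using nest[of l k] that unfolding R_def I_def by auto
  have Is: "I l \<in> sets M0" if "l \<in> R" for l
    by (rule sets_M0[OF IR[OF that]]) (simp add: I_def)
  have Iint: "integrable M0 (indicat_real (I l))" if "l \<in> R" for l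
    by (rule finite_measure.integrable_const_bound[OF finite_M0, of _ 1])
       (use Is[OF that] in \<open>auto simp: indicator_def\<close>)
  have eq: "F (nd k t) = (\<Sum>l\<in>R. indicat_real (I l) t * F l)" if "t \<in> space M0" for t
  proof -
    have t: "0 \<le> t" "t < m0" using that by auto
    have "(\<Sum>l\<in>R. indicat_real (I l) t * F l) = (\<Sum>l\<in>R. if nd k t = l then F l else 0)"
      by (rule sum.cong[OF refl]) (use nd_iff[OF t] in \<open>auto simp: I_def R_def indicator_def\<close>)
    also have "\<dots> = F (nd k t)" using finR nd_range[OF t, of k] by (simp add: sum.delta R_def)
    finally show ?thesis by simp
  qed
  have "(LINT t|M0. F (nd k t)) = (LINT t|M0. (\<Sum>l\<in>R. indicat_real (I l) t * F l))"
    by (rule Bochner_Integration.integral_cong) (simp_all add: eq)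
  also have "\<dots> = (\<Sum>l\<in>R. LINT t|M0. indicat_real (I l) t * F l)"
    by (rule Bochner_Integration.integral_sum) (use Iint in simp)
  also have "\<dots> = (\<Sum>l\<in>R. m l * F l)"
  proof (rule sum.cong[OF refl])
    fix l assume l: "l \<in> R"
    have "(LINT t|M0. indicat_real (I l) t * F l) = (LINT t|M0. indicat_real (I l) t) * F l"
      by (rule Bochner_Integration.integral_mult_left) (rule Iint[OF l])
    also have "(LINT t|M0. indicat_real (I l) t) = measure M0 (I l)"
      using Is[OF l] finite_measure.emeasure_finite[OF finite_M0] IR[OF l] by (simp add: Int_absorb2)
    also have "\<dots> = m l"
      using measure_M0[OF IR[OF l]] m_nonneg[of l] by (simp add: I_def)
    finally show "(LINT t|M0. indicat_real (I l) t * F l) = m l * F l" .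
  qed
  finally show ?thesis unfolding R_def .
qed

end


context emp begin

lemma c_sig_Suc: "sig (Suc k) (c (sig (Suc k) (y::'a))) = sig (Suc k) y"
proof -
  have "\<exists>z::'a. sig (length (sig (Suc k) y)) z = sig (Suc k) y" by auto
  then have "sig (length (sig (Suc k) y)) (c (sig (Suc k) y)) = sig (Suc k) y" by (rule c_sig)
  then show ?thesis by simp
qed

lemma Sn_eq:
  "(\<Sum>l\<in>range (sig (Suc k) :: 'a \<Rightarrow> nat list). mN n l * f (c l))
     = (\<Sum>i<K n. w n i * f (c (sig (Suc k) (p n i))))"
proof -
  define R where "R = range (sig (Suc k) :: 'a \<Rightarrow> nat list)"
  have finR: "finite R" unfolding R_def by (rule finite_sig_range[OF cpt])
  have "(\<Sum>l\<in>R. mN n l * f (c l))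
      = (\<Sum>l\<in>R. \<Sum>i<K n. if sig (Suc k) (p n i) = l then w n i * f (c l) else 0)"
  proof (rule sum.cong[OF refl])
    fix l assume "l \<in> R"
    then have len: "length l = Suc k" unfolding R_def by auto
    show "mN n l * f (c l) = (\<Sum>i<K n. if sig (Suc k) (p n i) = l then w n i * f (c l) else 0)"
      unfolding mN_def len sum_distrib_right by (rule sum.cong[OF refl]) simp
  qed
  also have "\<dots> = (\<Sum>i<K n. \<Sum>l\<in>R. if sig (Suc k) (p n i) = l then w n i * f (c l) else 0)"
    by (rule sum.swap)
  also have "\<dots> = (\<Sum>i<K n. w n i * f (c (sig (Suc k) (p n i))))"
  proof (rule sum.cong[OF refl])
    fix i
    have "sig (Suc k) (p n i) \<in> R" unfolding R_def by simp
    then show "(\<Sum>l\<in>R. if sig (Suc k) (p n i) = l then w n i * f (c l) else 0)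
        = w n i * f (c (sig (Suc k) (p n i)))"
      using finR by (simp add: sum.delta)
  qed
  finally show ?thesis unfolding R_def .
qed

lemma weak:
  assumes fc: "continuous_on UNIV (f::'a \<Rightarrow> real)"
  shows "(\<lambda>n. \<Sum>i<K (rr n). w (rr n) i * f (p (rr n) i)) \<longlonglongrightarrow> integral\<^sup>L mu f"
proof -
  have fm: "f \<in> borel_measurable borel" by (rule borel_measurable_continuous_onI[OF fc])
  have "bounded (f ` UNIV)" by (rule compact_imp_bounded[OF compact_continuous_image[OF fc cpt]])
  then obtain B where B: "\<And>x. norm (f x) \<le> B" unfolding bounded_iff by blast
  have uc: "uniformly_continuous_on UNIV f" by (rule compact_uniformly_continuous[OF fc cpt])
  have intmu: "integral\<^sup>L mu f = (LINT t|M0. f (Phi t))"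
    unfolding mu_def by (rule integral_distr[OF Phi_meas fm])
  show ?thesis
  proof (rule LIMSEQ_I)
    fix r :: real assume r: "0 < r"
    define e where "e = r / 4"
    have e: "0 < e" using r by (simp add: e_def)
    obtain d where d0: "0 < d" and d1: "\<forall>x\<in>UNIV. \<forall>x'\<in>UNIV. dist x' x < d \<longrightarrow> dist (f x') (f x) < e"
      using uc[unfolded uniformly_continuous_on_def, rule_format, OF e] by blast
    have d: "0 < d" "\<And>x x'. dist x' x < d \<Longrightarrow> dist (f x') (f x) < e"
      using d0 d1 by simp_all
    obtain k where k: "rad k < d / 2" using rad_small[of "d/2"] d(1) by auto
    define R where "R = range (sig (Suc k) :: 'a \<Rightarrow> nat list)"
    have finR: "finite R" unfolding R_def by (rule finite_sig_range[OF cpt])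
    define S where "S = (\<Sum>l\<in>R. m l * f (c l))"
    define Sn where "Sn = (\<lambda>n. \<Sum>l\<in>R. mN n l * f (c l))"
    have i1: "\<bar>integral\<^sup>L mu f - S\<bar> \<le> e"
    proof -
      have S: "S = (LINT t|M0. f (c (nd (Suc k) t)))"
        unfolding S_def R_def by (rule int_level[symmetric])
      have m1: "(\<lambda>t. f (Phi t)) \<in> borel_measurable M0" using measurable_compose[OF Phi_meas fm] .
      have Pm: "Phik (Suc k) \<in> borel_measurable M0"
        unfolding M0_def using Phik_meas[of "Suc k"] by (intro measurable_restrict_space1) simp
      have m2: "(\<lambda>t. f (Phik (Suc k) t)) \<in> borel_measurable M0" using measurable_compose[OF Pm fm] .
      have int1: "integrable M0 (\<lambda>t. f (Phi t))"
        by (rule finite_measure.integrable_const_bound[OF finite_M0 _ m1]) (use B in auto)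
      have int2: "integrable M0 (\<lambda>t. f (Phik (Suc k) t))"
        by (rule finite_measure.integrable_const_bound[OF finite_M0 _ m2]) (use B in auto)
      have pw: "\<bar>f (Phi t) - f (Phik (Suc k) t)\<bar> \<le> e" if "t \<in> space M0" for t
      proof -
        have t: "0 \<le> t" "t < m0" using that by auto
        have "dist (Phi t) (Phik (Suc k) t) < d" using Phi_close[OF t, of k] k by simp
        then have "dist (f (Phi t)) (f (Phik (Suc k) t)) < e" using d(2) by blast
        then show ?thesis by (simp add: dist_real_def)
      qed
      have "integral\<^sup>L mu f - S = (LINT t|M0. f (Phi t)) - (LINT t|M0. f (Phik (Suc k) t))"
        by (simp only: intmu S Phik_def)
      also have "\<dots> = (LINT t|M0. f (Phi t) - f (Phik (Suc k) t))"
        by (rule Bochner_Integration.integral_diff[OF int1 int2, symmetric])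
      finally have eq: "integral\<^sup>L mu f - S = (LINT t|M0. f (Phi t) - f (Phik (Suc k) t))" .
      have "\<bar>integral\<^sup>L mu f - S\<bar> \<le> (LINT t|M0. \<bar>f (Phi t) - f (Phik (Suc k) t)\<bar>)"
        unfolding eq by (rule integral_abs_bound)
      also have "\<dots> \<le> (LINT t|M0. e)"
        by (rule integral_mono[OF integrable_abs[OF Bochner_Integration.integrable_diff[OF int1 int2]]
              finite_measure.integrable_const[OF finite_M0] pw])
      also have "\<dots> = m0 * e" using measure_M0_space by simp
      also have "\<dots> \<le> e" using m_le1[of "[]"] e unfolding m0_def by (simp add: mult_le_cancel_right1)
      finally show ?thesis .
    qed
    have i2: "\<bar>(\<Sum>i<K n. w n i * f (p n i)) - Sn n\<bar> \<le> e" for n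
    proof -
      have "Sn n = (\<Sum>i<K n. w n i * f (c (sig (Suc k) (p n i))))"
        unfolding Sn_def R_def by (rule Sn_eq)
      then have "(\<Sum>i<K n. w n i * f (p n i)) - Sn n
          = (\<Sum>i<K n. w n i * (f (p n i) - f (c (sig (Suc k) (p n i)))))"
        by (simp add: sum_subtractf right_diff_distrib)
      also have "\<bar>\<dots>\<bar> \<le> (\<Sum>i<K n. \<bar>w n i * (f (p n i) - f (c (sig (Suc k) (p n i))))\<bar>)"
        by (rule sum_abs)
      also have "\<dots> \<le> (\<Sum>i<K n. w n i * e)"
      proof (rule sum_mono)
        fix i
        have "dist (p n i) (c (sig (Suc k) (p n i))) < 2 * rad k"
          by (rule sig_dist[OF cpt]) (rule c_sig_Suc[symmetric])
        then have "dist (p n i) (c (sig (Suc k) (p n i))) < d" using k by simp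
        then have "dist (f (p n i)) (f (c (sig (Suc k) (p n i)))) < e" by (rule d(2))
        then have "\<bar>f (p n i) - f (c (sig (Suc k) (p n i)))\<bar> \<le> e" by (simp add: dist_real_def)
        then show "\<bar>w n i * (f (p n i) - f (c (sig (Suc k) (p n i))))\<bar> \<le> w n i * e"
          using wpos[of n i] by (simp add: abs_mult mult_left_mono)
      qed
      also have "\<dots> = (\<Sum>i<K n. w n i) * e" by (simp add: sum_distrib_right)
      also have "\<dots> \<le> e" using wsum[of n] e by (simp add: mult_le_cancel_right1)
      finally show ?thesis .
    qed
    have "(\<lambda>n. Sn (rr n)) \<longlonglongrightarrow> S"
      unfolding Sn_def S_def by (intro tendsto_sum tendsto_mult_right m_lim)
    from LIMSEQ_D[OF this e] obtain N where N: "\<forall>n\<ge>N. norm (Sn (rr n) - S) < e"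
      by blast
    show "\<exists>no. \<forall>n\<ge>no. norm ((\<Sum>i<K (rr n). w (rr n) i * f (p (rr n) i)) - integral\<^sup>L mu f) < r"
    proof (intro exI allI impI)
      fix n assume "N \<le> n"
      then have a: "\<bar>Sn (rr n) - S\<bar> < e" using N by (simp del: real_norm_def add: real_norm_def)
      have b: "\<bar>(\<Sum>i<K (rr n). w (rr n) i * f (p (rr n) i)) - Sn (rr n)\<bar> \<le> e" by (rule i2)
      define E where "E = (\<Sum>i<K (rr n). w (rr n) i * f (p (rr n) i))"
      have "\<bar>E - integral\<^sup>L mu f\<bar> < r"
        using a b i1 unfolding e_def E_def[symmetric] by arith
      then show "norm ((\<Sum>i<K (rr n). w (rr n) i * f (p (rr n) i)) - integral\<^sup>L mu f) < r"
        unfolding E_def by simp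
    qed
  qed
qed

end


lemma G:
  fixes p :: "nat \<Rightarrow> nat \<Rightarrow> 'a::metric_space" and w :: "nat \<Rightarrow> nat \<Rightarrow> real" and K :: "nat \<Rightarrow> nat"
  assumes cpt: "compact (UNIV::'a set)"
    and wpos: "\<And>n i. 0 \<le> w n i"
    and wsum: "\<And>n. (\<Sum>i<K n. w n i) \<le> 1"
  shows "\<exists>r M. strict_mono r \<and> sets M = sets borel \<and> finite_measure M \<and>
    (\<forall>f. continuous_on UNIV f \<longrightarrow>
       (\<lambda>n. \<Sum>i<K (r n). w (r n) i * f (p (r n) i)) \<longlonglongrightarrow> integral\<^sup>L M f)"
proof -
  interpret emp p w K using assms by unfold_locales
  show ?thesis
    by (intro exI[of _ rr] exI[of _ mu] conjI allI impI rr_mono sets_mu finite_mu weak)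
qed

lemma G_sub:
  fixes p :: "nat \<Rightarrow> nat \<Rightarrow> 'a::metric_space" and w :: "nat \<Rightarrow> nat \<Rightarrow> real" and K :: "nat \<Rightarrow> nat" and s :: "nat \<Rightarrow> nat"
  assumes cpt: "compact (UNIV::'a set)"
    and wpos: "\<And>n i. 0 \<le> w n i"
    and wsum: "\<And>n. (\<Sum>i<K n. w n i) \<le> 1"
    and s: "strict_mono s"
  shows "\<exists>r M. strict_mono r \<and> sets M = sets borel \<and> finite_measure M \<and>
    (\<forall>f. continuous_on UNIV f \<longrightarrow>
       (\<lambda>n. \<Sum>i<K (s (r n)). w (s (r n)) i * f (p (s (r n)) i)) \<longlonglongrightarrow> integral\<^sup>L M f)"
proof -
  have g1: "\<And>n i. 0 \<le> (\<lambda>n. w (s n)) n i" by (simp add: wpos)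
  have g2: "\<And>n. (\<Sum>i<(\<lambda>n. K (s n)) n. (\<lambda>n. w (s n)) n i) \<le> 1" by (simp add: wsum)
  from G[OF cpt g1 g2, where p="\<lambda>n. p (s n)"] show ?thesis .
qed

lemma cont_integrable:
  assumes cpt: "compact (UNIV::'a::metric_space set)" and M: "sets M = sets borel" "finite_measure M"
    and f: "continuous_on UNIV (f::'a \<Rightarrow> 'b::{banach, second_countable_topology})"
  shows "integrable M f"
proof -
  have "bounded (f ` UNIV)" by (rule compact_imp_bounded[OF compact_continuous_image[OF f cpt]])
  then obtain B where B: "\<And>x. norm (f x) \<le> B" unfolding bounded_iff by blast
  have fm: "f \<in> borel_measurable M"
    unfolding measurable_cong_sets[OF M(1) refl] by (rule borel_measurable_continuous_onI[OF f])
  show ?thesis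
    by (rule finite_measure.integrable_const_bound[OF M(2) AE_I2[OF B] fm])
qed

lemma cweak:
  fixes p :: "nat \<Rightarrow> nat \<Rightarrow> 'a::metric_space"
  assumes cpt: "compact (UNIV::'a set)" and M: "sets M = sets borel" "finite_measure M"
    and conv: "\<And>f. continuous_on UNIV f \<Longrightarrow>
       (\<lambda>n. \<Sum>i<K n. w n i * f (p n i)) \<longlonglongrightarrow> integral\<^sup>L M f"
    and h: "continuous_on UNIV (h::'a \<Rightarrow> complex)"
  shows "(\<lambda>n. \<Sum>i<K n. complex_of_real (w n i) * h (p n i)) \<longlonglongrightarrow> integral\<^sup>L M h"
proof -
  have ih: "integrable M h" by (rule cont_integrable[OF cpt M h])
  have hr: "continuous_on UNIV (\<lambda>x. Re (h x))" "continuous_on UNIV (\<lambda>x. Im (h x))"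
    using h by (auto intro: continuous_intros)
  have "(\<lambda>n. \<Sum>i<K n. w n i * Re (h (p n i))) \<longlonglongrightarrow> integral\<^sup>L M (\<lambda>x. Re (h x))"
    by (rule conv[OF hr(1)])
  moreover have "(\<lambda>n. \<Sum>i<K n. w n i * Im (h (p n i))) \<longlonglongrightarrow> integral\<^sup>L M (\<lambda>x. Im (h x))"
    by (rule conv[OF hr(2)])
  ultimately show ?thesis
    unfolding tendsto_complex_iff using integral_Re[OF ih] integral_Im[OF ih]
    by (simp add: Re_sum Im_sum)
qed


lemma closed_approx:
  fixes M :: "'a::metric_space measure"
  assumes M: "sets M = sets borel" "finite_measure M"
    and F: "closed F" "F \<noteq> {}"
  defines "fk \<equiv> (\<lambda>k::nat. \<lambda>x. max 0 (1 - real k * infdist x F))"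
  shows "(\<lambda>k. integral\<^sup>L M (fk k)) \<longlonglongrightarrow> measure M F"
proof -
  have Fs: "F \<in> sets M" using F(1) M(1) by simp
  have meas: "fk k \<in> borel_measurable M" for k
  proof -
    have "continuous_on UNIV (fk k)" unfolding fk_def by (intro continuous_intros)
    then have "fk k \<in> borel_measurable borel" by (rule borel_measurable_continuous_onI)
    then show ?thesis unfolding measurable_cong_sets[OF M(1) refl] .
  qed
  have lim: "(\<lambda>k. fk k x) \<longlonglongrightarrow> indicator F x" for x
  proof (cases "x \<in> F")
    case True
    then have "infdist x F = 0" using in_closed_iff_infdist_zero[OF F] by blast
    then show ?thesis using True unfolding fk_def by simp
  next
    case False
    then have pos: "0 < infdist x F"
      using in_closed_iff_infdist_zero[OF F] infdist_nonneg[of x F] by (simp add: order_le_less)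
    obtain N :: nat where N: "1 / infdist x F < real N" using reals_Archimedean2 by blast
    have "fk k x = 0" if "k \<ge> N" for k
    proof -
      have "real N \<le> real k" using that by simp
      then have "1 / infdist x F < real k" using N by linarith
      then have "1 < real k * infdist x F" using pos by (simp add: field_simps)
      then show ?thesis unfolding fk_def by simp
    qed
    then have "eventually (\<lambda>k. fk k x = 0) sequentially" unfolding eventually_sequentially by blast
    then have "(\<lambda>k. fk k x) \<longlonglongrightarrow> 0" by (rule tendsto_eventually)
    then show ?thesis using False by simp
  qed
  have "(\<lambda>k. integral\<^sup>L M (fk k)) \<longlonglongrightarrow> integral\<^sup>L M (indicator F)"
  proof (rule integral_dominated_convergence[where w="\<lambda>x. 1"])
    show "indicat_real F \<in> borel_measurable M" using Fs by simp
    show "\<And>k. fk k \<in> borel_measurable M" by (rule meas)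
    show "integrable M (\<lambda>x. 1::real)" by (rule finite_measure.integrable_const[OF M(2)])
    show "AE x in M. (\<lambda>k. fk k x) \<longlonglongrightarrow> indicat_real F x" using lim by simp
    show "\<And>k. AE x in M. norm (fk k x) \<le> 1"
      unfolding fk_def by (intro AE_I2) (simp add: infdist_nonneg)
  qed
  also have "integral\<^sup>L M (indicator F) = measure M F"
    using Fs finite_measure.emeasure_finite[OF M(2)] by simp
  finally show ?thesis .
qed

lemma meas_add_eq:
  fixes M1 M2 M3 :: "'a::metric_space measure"
  assumes S: "sets M1 = sets borel" "sets M2 = sets borel" "sets M3 = sets borel"
    and Fi: "finite_measure M1" "finite_measure M2" "finite_measure M3"
    and H: "\<And>f::'a \<Rightarrow> real. continuous_on UNIV f \<Longrightarrow>
              integral\<^sup>L M1 f + integral\<^sup>L M2 f = integral\<^sup>L M3 f"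
    and A: "A \<in> sets borel"
  shows "measure M1 A + measure M2 A = measure M3 A"
proof -
  have sp: "space M1 = UNIV" "space M2 = UNIV" "space M3 = UNIV"
    using sets_eq_imp_space_eq[OF S(1)] sets_eq_imp_space_eq[OF S(2)] sets_eq_imp_space_eq[OF S(3)] by simp_all
  define P where "P = (\<lambda>A. measure M1 A + measure M2 A = measure M3 A)"
  have closedP: "P F" if "closed F" for F
  proof (cases "F = {}")
    case True then show ?thesis unfolding P_def by simp
  next
    case False
    define fk where "fk = (\<lambda>k::nat. \<lambda>x. max 0 (1 - real k * infdist x F))"
    have c: "continuous_on UNIV (fk k)" for k unfolding fk_def by (intro continuous_intros)
    have l1: "(\<lambda>k. integral\<^sup>L M1 (fk k)) \<longlonglongrightarrow> measure M1 F"
      unfolding fk_def by (rule closed_approx[OF S(1) Fi(1) that False])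
    have l2: "(\<lambda>k. integral\<^sup>L M2 (fk k)) \<longlonglongrightarrow> measure M2 F"
      unfolding fk_def by (rule closed_approx[OF S(2) Fi(2) that False])
    have l3: "(\<lambda>k. integral\<^sup>L M3 (fk k)) \<longlonglongrightarrow> measure M3 F"
      unfolding fk_def by (rule closed_approx[OF S(3) Fi(3) that False])
    have "(\<lambda>k. integral\<^sup>L M1 (fk k) + integral\<^sup>L M2 (fk k)) \<longlonglongrightarrow> measure M1 F + measure M2 F"
      by (rule tendsto_add[OF l1 l2])
    then have "(\<lambda>k. integral\<^sup>L M3 (fk k)) \<longlonglongrightarrow> measure M1 F + measure M2 F"
      using H[OF c] by simp
    then show ?thesis unfolding P_def using LIMSEQ_unique[OF _ l3] by blast
  qed
  have sb: "sets borel = sigma_sets UNIV (Collect closed)"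
    unfolding borel_eq_closed by (rule sets_measure_of) simp
  have Asig: "A \<in> sigma_sets UNIV (Collect closed)" using A by (simp only: sb)
  show ?thesis
  proof (rule sigma_sets_induct_disjoint[OF _ _ Asig, of P, unfolded P_def])
    show "Int_stable (Collect closed)" by (auto simp: Int_stable_def)
    show "Collect closed \<subseteq> Pow UNIV" by simp
    show "\<And>A. A \<in> Collect closed \<Longrightarrow> measure M1 A + measure M2 A = measure M3 A"
      using closedP unfolding P_def by simp
    show "measure M1 {} + measure M2 {} = measure M3 {}" by simp
  next
    fix A assume A: "A \<in> sigma_sets UNIV (Collect closed)"
      and IH: "measure M1 A + measure M2 A = measure M3 A"
    have As: "A \<in> sets M1" "A \<in> sets M2" "A \<in> sets M3"
      by (simp_all only: S sb A)
    have U: "measure M1 UNIV + measure M2 UNIV = measure M3 UNIV"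
      using closedP[of UNIV] unfolding P_def by simp
    have "measure M1 (UNIV - A) = measure M1 UNIV - measure M1 A"
      using finite_measure.finite_measure_compl[OF Fi(1) As(1)] sp by simp
    moreover have "measure M2 (UNIV - A) = measure M2 UNIV - measure M2 A"
      using finite_measure.finite_measure_compl[OF Fi(2) As(2)] sp by simp
    moreover have "measure M3 (UNIV - A) = measure M3 UNIV - measure M3 A"
      using finite_measure.finite_measure_compl[OF Fi(3) As(3)] sp by simp
    ultimately show "measure M1 (UNIV - A) + measure M2 (UNIV - A) = measure M3 (UNIV - A)"
      using U IH by simp
  next
    fix A :: "nat \<Rightarrow> 'a set"
    assume d: "disjoint_family A" and r: "range A \<subseteq> sigma_sets UNIV (Collect closed)"
      and IH: "\<And>i. measure M1 (A i) + measure M2 (A i) = measure M3 (A i)"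
    have rs: "range A \<subseteq> sets M1" "range A \<subseteq> sets M2" "range A \<subseteq> sets M3"
      by (simp_all only: S sb r)
    have s1: "(\<lambda>i. measure M1 (A i)) sums measure M1 (\<Union>i. A i)"
      by (rule finite_measure.finite_measure_UNION[OF Fi(1) rs(1) d])
    have s2: "(\<lambda>i. measure M2 (A i)) sums measure M2 (\<Union>i. A i)"
      by (rule finite_measure.finite_measure_UNION[OF Fi(2) rs(2) d])
    have s3: "(\<lambda>i. measure M3 (A i)) sums measure M3 (\<Union>i. A i)"
      by (rule finite_measure.finite_measure_UNION[OF Fi(3) rs(3) d])
    have "(\<lambda>i. measure M1 (A i) + measure M2 (A i)) sums (measure M1 (\<Union>i. A i) + measure M2 (\<Union>i. A i))"
      by (rule sums_add[OF s1 s2])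
    then have "(\<lambda>i. measure M3 (A i)) sums (measure M1 (\<Union>i. A i) + measure M2 (\<Union>i. A i))"
      using IH by simp
    then show "measure M1 (\<Union> (range A)) + measure M2 (\<Union> (range A)) = measure M3 (\<Union> (range A))"
      using sums_unique2[OF s3] by simp
  qed
qed


lemma density01:
  fixes mu A :: "'a::metric_space measure"
  assumes S: "sets mu = sets borel" "sets A = sets borel"
    and Fi: "finite_measure mu" "finite_measure A"
    and le: "\<And>X. X \<in> sets borel \<Longrightarrow> measure A X \<le> measure mu X"
  shows "\<exists>d. d \<in> borel_measurable borel \<and> (\<forall>x. 0 \<le> d x \<and> d x \<le> 1) \<and>
    (\<forall>h::'a \<Rightarrow> real. h \<in> borel_measurable borel \<longrightarrow> integral\<^sup>L A h = (\<integral>x. d x * h x \<partial>mu))"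
proof -
  interpret mu: finite_measure mu by (rule Fi(1))
  interpret A: finite_measure A by (rule Fi(2))
  have sAm: "sets A = sets mu" using S by simp
  have ac: "absolutely_continuous mu A"
    unfolding absolutely_continuous_def
  proof
    fix X assume X: "X \<in> null_sets mu"
    then have Xs: "X \<in> sets borel" "emeasure mu X = 0" using S(1) by auto
    then have "measure mu X = 0" by (simp add: measure_def)
    then have "measure A X = 0" using le[OF Xs(1)] measure_nonneg[of A X] by simp
    then have "emeasure A X = 0" using A.emeasure_eq_measure[of X] by simp
    moreover have "X \<in> sets A" using Xs(1) S(2) by simp
    ultimately show "X \<in> null_sets A" by (rule null_setsI)
  qed
  have sfA: "sigma_finite_measure A" by (rule A.sigma_finite_measure_axioms)
  define D where "D = (\<lambda>x. enn2real (RN_deriv mu A x))"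
  have Dm: "D \<in> borel_measurable mu" unfolding D_def
    by (intro borel_measurable_enn2real borel_measurable_RN_deriv)
  have Dpos: "0 \<le> D x" for x unfolding D_def by simp
  have intD: "integral\<^sup>L A h = (\<integral>x. D x * h x \<partial>mu)" if "h \<in> borel_measurable mu" for h :: "'a \<Rightarrow> real"
    unfolding D_def by (rule mu.RN_deriv_integral[OF sfA ac sAm that])
  have iD1: "integrable mu (\<lambda>x. D x * 1)"
    unfolding D_def using mu.RN_deriv_integrable[OF sfA ac sAm, of "\<lambda>x. 1"] by simp
  define X where "X = {x. 1 < D x}"
  have spm: "space mu = UNIV" using sets_eq_imp_space_eq[OF S(1)] by simp
  have "{x \<in> space mu. 1 < D x} \<in> sets mu" using Dm by measurable
  then have Xs: "X \<in> sets mu" unfolding X_def spm by simp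
  have Xb: "X \<in> sets borel" using Xs S(1) by simp
  have iX: "integrable mu (indicat_real X)"
    by (rule integrable_real_indicator[OF Xs]) (simp add: less_top[symmetric])
  have iDX: "integrable mu (\<lambda>x. D x * indicat_real X x)"
    by (rule integrable_real_mult_indicator[OF Xs]) (use iD1 in simp)
  have a: "(\<integral>x. D x * indicat_real X x \<partial>mu) = measure A X"
  proof -
    have "(\<integral>x. D x * indicat_real X x \<partial>mu) = integral\<^sup>L A (indicat_real X)"
      by (rule intD[symmetric]) (use Xs in simp)
    also have "\<dots> = measure A X" using Xb S(2) by simp
    finally show ?thesis .
  qed
  have b: "(\<integral>x. indicat_real X x \<partial>mu) = measure mu X" using Xs by simp
  define G where "G = (\<lambda>x. indicat_real X x * (D x - 1))"
  have iG: "integrable mu G" unfolding G_def using iDX iX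
    by (simp add: right_diff_distrib mult.commute)
  have Gnn: "AE x in mu. 0 \<le> G x" unfolding G_def X_def by (intro AE_I2) (simp add: indicator_def)
  have "integral\<^sup>L mu G = (\<integral>x. D x * indicat_real X x \<partial>mu) - (\<integral>x. indicat_real X x \<partial>mu)"
  proof -
    have "integral\<^sup>L mu G = (\<integral>x. D x * indicat_real X x - indicat_real X x \<partial>mu)"
      unfolding G_def by (rule Bochner_Integration.integral_cong) (simp_all add: algebra_simps)
    also have "\<dots> = (\<integral>x. D x * indicat_real X x \<partial>mu) - (\<integral>x. indicat_real X x \<partial>mu)"
      by (rule Bochner_Integration.integral_diff[OF iDX iX])
    finally show ?thesis .
  qed
  then have "integral\<^sup>L mu G \<le> 0" using a b le[OF Xb] by simp
  moreover have "0 \<le> integral\<^sup>L mu G" by (rule integral_nonneg_AE[OF Gnn])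
  ultimately have "integral\<^sup>L mu G = 0" by simp
  then have "AE x in mu. G x = 0" using integral_nonneg_eq_0_iff_AE[OF iG Gnn] by simp
  then have AEle: "AE x in mu. D x \<le> 1"
    by eventually_elim (auto simp: G_def X_def indicator_def split: if_splits)
  define d where "d = (\<lambda>x. min (D x) 1)"
  have dm: "d \<in> borel_measurable mu" unfolding d_def using Dm by measurable
  show ?thesis
  proof (intro exI conjI allI impI)
    show "d \<in> borel_measurable borel" using dm unfolding measurable_cong_sets[OF S(1) refl] .
    fix x show "0 \<le> d x" "d x \<le> 1" unfolding d_def using Dpos[of x] by auto
  next
    fix h :: "'a \<Rightarrow> real" assume "h \<in> borel_measurable borel"
    then have hm: "h \<in> borel_measurable mu" unfolding measurable_cong_sets[OF S(1) refl] .
    have "integral\<^sup>L A h = (\<integral>x. D x * h x \<partial>mu)" by (rule intD[OF hm])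
    also have "\<dots> = (\<integral>x. d x * h x \<partial>mu)"
    proof (rule integral_cong_AE)
      show "(\<lambda>x. D x * h x) \<in> borel_measurable mu" using Dm hm by measurable
      show "(\<lambda>x. d x * h x) \<in> borel_measurable mu" using dm hm by measurable
      show "AE x in mu. D x * h x = d x * h x" using AEle by eventually_elim (simp add: d_def)
    qed
    finally show "integral\<^sup>L A h = (\<integral>x. d x * h x \<partial>mu)" .
  qed
qed

lemma inv_measure:
  fixes mu :: "'a::metric_space measure" and T :: "'a \<Rightarrow> 'a"
  assumes S: "sets mu = sets borel" and Fi: "finite_measure mu"
    and Tc: "continuous_on UNIV T"
    and H: "\<And>f::'a \<Rightarrow> real. continuous_on UNIV f \<Longrightarrow> (\<integral>y. f (T y) \<partial>mu) = integral\<^sup>L mu f"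
  shows "distr mu borel T = mu"
proof -
  have Tm: "T \<in> mu \<rightarrow>\<^sub>M borel"
    unfolding measurable_cong_sets[OF S refl] by (rule borel_measurable_continuous_onI[OF Tc])
  have Fd: "finite_measure (distr mu borel T)" by (rule finite_measure.finite_measure_distr[OF Fi Tm])
  have Fn: "finite_measure (null_measure (borel :: 'a measure))"
    by (rule finite_measureI) simp
  have eq: "measure (distr mu borel T) A + measure (null_measure borel) A = measure mu A"
    if A: "A \<in> sets borel" for A
  proof (rule meas_add_eq[OF _ _ S Fd Fn Fi _ A])
    fix f :: "'a \<Rightarrow> real" assume fc: "continuous_on UNIV f"
    have "integral\<^sup>L (distr mu borel T) f = (\<integral>y. f (T y) \<partial>mu)"
      by (rule integral_distr[OF Tm borel_measurable_continuous_onI[OF fc]])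
    then show "integral\<^sup>L (distr mu borel T) f + integral\<^sup>L (null_measure borel) f = integral\<^sup>L mu f"
      using H[OF fc] by simp
  qed simp_all
  show ?thesis
  proof (rule measure_eqI)
    show "sets (distr mu borel T) = sets mu" using S by simp
    fix A assume "A \<in> sets (distr mu borel T)"
    then have A: "A \<in> sets borel" by simp
    have "measure (distr mu borel T) A = measure mu A"
      using eq[OF A] by (simp add: measure_def)
    then show "emeasure (distr mu borel T) A = emeasure mu A"
      using finite_measure.emeasure_eq_measure[OF Fd, of A] finite_measure.emeasure_eq_measure[OF Fi, of A]
      by simp
  qed
qed


definition CV :: "(nat \<Rightarrow> nat \<Rightarrow> 'a::metric_space) \<Rightarrow> (nat \<Rightarrow> nat \<Rightarrow> real) \<Rightarrow> 'a measure \<Rightarrow> (nat \<Rightarrow> nat) \<Rightarrow> bool" where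
  "CV p w M s \<longleftrightarrow> (\<forall>f. continuous_on UNIV f \<longrightarrow>
     (\<lambda>n. \<Sum>i<s n. w (s n) i * f (p (s n) i)) \<longlonglongrightarrow> integral\<^sup>L M f)"

lemma CV_sub:
  assumes "CV p w M s" "strict_mono t" shows "CV p w M (s \<circ> t)"
  unfolding CV_def
proof (intro allI impI)
  fix f :: "'a \<Rightarrow> real" assume "continuous_on UNIV f"
  then have "(\<lambda>n. \<Sum>i<s n. w (s n) i * f (p (s n) i)) \<longlonglongrightarrow> integral\<^sup>L M f"
    by (rule assms(1)[unfolded CV_def, rule_format])
  from LIMSEQ_subseq_LIMSEQ[OF this assms(2)]
  show "(\<lambda>n. \<Sum>i<(s \<circ> t) n. w ((s \<circ> t) n) i * f (p ((s \<circ> t) n) i)) \<longlonglongrightarrow> integral\<^sup>L M f"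
    by (simp add: o_def)
qed

lemma G_CV:
  fixes p :: "nat \<Rightarrow> nat \<Rightarrow> 'a::metric_space" and w :: "nat \<Rightarrow> nat \<Rightarrow> real" and s :: "nat \<Rightarrow> nat"
  assumes cpt: "compact (UNIV::'a set)"
    and wpos: "\<And>n i. 0 \<le> w n i"
    and wsum: "\<And>n. (\<Sum>i<n. w n i) \<le> 1"
    and s: "strict_mono s"
  shows "\<exists>r M. strict_mono r \<and> sets M = sets borel \<and> finite_measure M \<and> CV p w M (s \<circ> r)"
proof -
  have g2: "\<And>n. (\<Sum>i<(\<lambda>n. n) n. w n i) \<le> 1" by (simp add: wsum)
  from G_sub[where K="\<lambda>n. n" and w=w and p=p and s=s, OF cpt wpos g2 s] show ?thesis
  proof (elim exE conjE)
    fix r M assume r: "strict_mono r" "sets M = sets borel" "finite_measure M"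
      "\<forall>f. continuous_on UNIV f \<longrightarrow> (\<lambda>n. \<Sum>i<s (r n). w (s (r n)) i * f (p (s (r n)) i)) \<longlonglongrightarrow> integral\<^sup>L M f"
    have "CV p w M (s \<circ> r)" unfolding CV_def o_def using r(4) by simp
    then show ?thesis using r(1-3) by (intro exI[of _ r] exI[of _ M] conjI)
  qed
qed

lemma CV_complex:
  fixes p :: "nat \<Rightarrow> nat \<Rightarrow> 'a::metric_space"
  assumes cpt: "compact (UNIV::'a set)" and M: "sets M = sets borel" "finite_measure M"
    and cv: "CV p w M s" and h: "continuous_on UNIV (h::'a \<Rightarrow> complex)"
  shows "(\<lambda>n. \<Sum>i<s n. complex_of_real (w (s n) i) * h (p (s n) i)) \<longlonglongrightarrow> integral\<^sup>L M h"
proof -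
  have conv: "\<And>f. continuous_on UNIV f \<Longrightarrow>
       (\<lambda>n. \<Sum>i<s n. w (s n) i * f (p (s n) i)) \<longlonglongrightarrow> integral\<^sup>L M f"
    by (rule cv[unfolded CV_def, rule_format])
  show ?thesis by (rule cweak[OF cpt M conv h])
qed

lemma CV_unique_real:
  assumes "CV p w M s" "continuous_on UNIV f"
    and "(\<lambda>n. \<Sum>i<s n. w (s n) i * f (p (s n) i)) \<longlonglongrightarrow> L"
  shows "integral\<^sup>L M f = L"
proof -
  have "(\<lambda>n. \<Sum>i<s n. w (s n) i * f (p (s n) i)) \<longlonglongrightarrow> integral\<^sup>L M f"
    by (rule assms(1)[unfolded CV_def, rule_format, OF assms(2)])
  from LIMSEQ_unique[OF this assms(3)] show ?thesis .
qed

lemma sum_1N: "(\<Sum>i\<in>{1..N}. g i) = (\<Sum>i<N. g (Suc i))"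
  by (rule sum.reindex_bij_witness[where i="\<lambda>l. Suc l" and j="\<lambda>l. l - 1"]) auto

lemma coef_id:
  fixes z :: complex and r :: real
  shows "complex_of_real ((1 + Re z) / (2 * r)) - complex_of_real ((1 - Re z) / (2 * r))
     + \<i> * (complex_of_real ((1 + Im z) / (2 * r)) - complex_of_real ((1 - Im z) / (2 * r)))
     = z / complex_of_real r"
  by (cases "r = 0") (simp_all add: complex_eq_iff field_simps)

lemma nu_shift:
  fixes xs :: "nat \<Rightarrow> 'a" and ph h :: "'a \<Rightarrow> complex"
  assumes N: "1 \<le> N"
    and step: "\<And>l. 1 \<le> l \<Longrightarrow> l \<le> N - 1 \<Longrightarrow> xs (Suc l) = T (xs l)"
    and inv: "\<And>y. Tinv (T y) = y"
    and pstep: "\<And>l. 1 \<le> l \<Longrightarrow> l \<le> N - 1 \<Longrightarrow> ph (xs (Suc l)) = lam * ph (xs l)"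
  shows "emp_nu xs N ph (h \<circ> Tinv) - lam * emp_nu xs N ph h
       = (1 / of_nat N) * (h (Tinv (xs 1)) * ph (xs 1) - lam * (h (xs N) * ph (xs N)))"
proof -
  obtain M where M: "N = Suc M" using N by (cases N) auto
  define F where "F = (\<lambda>l. h (Tinv (xs l)) * ph (xs l))"
  define G where "G = (\<lambda>l. h (xs l) * ph (xs l))"
  have FG: "F (Suc (Suc i)) = lam * G (Suc i)" if "i < M" for i
  proof -
    have "xs (Suc (Suc i)) = T (xs (Suc i))" using step[of "Suc i"] that M by simp
    moreover have "ph (xs (Suc (Suc i))) = lam * ph (xs (Suc i))" using pstep[of "Suc i"] that M by simp
    ultimately show ?thesis unfolding F_def G_def using inv by simp
  qed
  have s1: "(\<Sum>i<N. F (Suc i)) = F 1 + lam * (\<Sum>i<M. G (Suc i))"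
  proof -
    have "(\<Sum>i<N. F (Suc i)) = F (Suc 0) + (\<Sum>i<M. F (Suc (Suc i)))"
      unfolding M by (rule sum.lessThan_Suc_shift)
    also have "(\<Sum>i<M. F (Suc (Suc i))) = (\<Sum>i<M. lam * G (Suc i))"
      by (rule sum.cong) (simp_all add: FG)
    finally show ?thesis by (simp add: sum_distrib_left)
  qed
  have s2: "(\<Sum>i<N. G (Suc i)) = (\<Sum>i<M. G (Suc i)) + G N"
    unfolding M by simp
  have "emp_nu xs N ph (h \<circ> Tinv) = (1 / of_nat N) * (\<Sum>i<N. F (Suc i))"
    unfolding emp_nu_def sum_1N F_def by simp
  moreover have "emp_nu xs N ph h = (1 / of_nat N) * (\<Sum>i<N. G (Suc i))"
    unfolding emp_nu_def sum_1N G_def by simp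
  ultimately show ?thesis unfolding s1 s2 F_def[symmetric] G_def[symmetric]
    by (simp add: algebra_simps F_def G_def)
qed

lemma mu_shift:
  fixes xs :: "nat \<Rightarrow> 'a" and f :: "'a \<Rightarrow> real"
  assumes N: "1 \<le> N"
    and step: "\<And>l. 1 \<le> l \<Longrightarrow> l \<le> N - 1 \<Longrightarrow> xs (Suc l) = T (xs l)"
  shows "(\<Sum>i<N. (1 / real N) * f (T (xs (Suc i)))) - (\<Sum>i<N. (1 / real N) * f (xs (Suc i)))
       = (1 / real N) * (f (T (xs N)) - f (xs 1))"
proof -
  obtain M where M: "N = Suc M" using N by (cases N) auto
  have a: "(\<Sum>i<N. f (T (xs (Suc i)))) = (\<Sum>i<M. f (xs (Suc (Suc i)))) + f (T (xs N))"
  proof -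
    have "(\<Sum>i<N. f (T (xs (Suc i)))) = (\<Sum>i<M. f (T (xs (Suc i)))) + f (T (xs (Suc M)))"
      unfolding M by simp
    also have "(\<Sum>i<M. f (T (xs (Suc i)))) = (\<Sum>i<M. f (xs (Suc (Suc i))))"
      by (rule sum.cong) (use step M in simp_all)
    finally show ?thesis using M by simp
  qed
  have b: "(\<Sum>i<N. f (xs (Suc i))) = f (xs (Suc 0)) + (\<Sum>i<M. f (xs (Suc (Suc i))))"
    unfolding M by (rule sum.lessThan_Suc_shift)
  show ?thesis
    unfolding sum_distrib_left[symmetric] a b by (simp add: algebra_simps)
qed


lemma wsum_gen:
  assumes "\<And>i. i < n \<Longrightarrow> v i \<le> 1 / real n"
  shows "(\<Sum>i<n. v i) \<le> 1"
proof -
  have "(\<Sum>i<n. v i) \<le> (\<Sum>i<n. 1 / real n)" by (rule sum_mono) (use assms in simp)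
  also have "\<dots> \<le> 1" by (cases "n = 0") simp_all
  finally show ?thesis .
qed

lemma bnd_int:
  fixes F :: "'a \<Rightarrow> 'b::{banach, second_countable_topology}"
  assumes "finite_measure M" "F \<in> borel_measurable M" "\<And>y. norm (F y) \<le> C"
  shows "integrable M F"
proof (rule finite_measure.integrable_const_bound[OF assms(1) _ assms(2)])
  show "AE x in M. norm (F x) \<le> C" by (rule AE_I2) (rule assms(3))
qed

lemma dens_complex:
  fixes M A :: "'a::metric_space measure" and h :: "'a \<Rightarrow> complex"
  assumes S: "sets M = sets borel" "sets A = sets borel" and Fi: "finite_measure M" "finite_measure A"
    and dm: "d \<in> borel_measurable borel" and d01: "\<And>y. 0 \<le> d y \<and> d y \<le> 1"
    and dint: "\<And>h::'a \<Rightarrow> real. h \<in> borel_measurable borel \<Longrightarrow> integral\<^sup>L A h = (\<integral>x. d x * h x \<partial>M)"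
    and hm: "h \<in> borel_measurable borel" and hb: "\<And>y. norm (h y) \<le> C"
  shows "integral\<^sup>L A h = (\<integral>y. complex_of_real (d y) * h y \<partial>M)"
proof -
  have hmA: "h \<in> borel_measurable A" using hm unfolding measurable_cong_sets[OF S(2) refl] .
  have hmM: "h \<in> borel_measurable M" using hm unfolding measurable_cong_sets[OF S(1) refl] .
  have dmM: "d \<in> borel_measurable M" using dm unfolding measurable_cong_sets[OF S(1) refl] .
  have iA: "integrable A h" by (rule bnd_int[OF Fi(2) hmA hb])
  have pm: "(\<lambda>y. complex_of_real (d y) * h y) \<in> borel_measurable M" using hmM dmM by measurable
  have pb: "norm (complex_of_real (d y) * h y) \<le> C" for y
  proof -
    have "norm (complex_of_real (d y) * h y) = d y * norm (h y)" using d01[of y] by (simp add: norm_mult)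
    also have "\<dots> \<le> 1 * C" using d01[of y] hb[of y] by (intro mult_mono) auto
    finally show ?thesis by simp
  qed
  have iM: "integrable M (\<lambda>y. complex_of_real (d y) * h y)" by (rule bnd_int[OF Fi(1) pm pb])
  have reh: "(\<lambda>y. Re (h y)) \<in> borel_measurable borel" using hm by measurable
  have imh: "(\<lambda>y. Im (h y)) \<in> borel_measurable borel" using hm by measurable
  show ?thesis
  proof (rule complex_eqI)
    have "Re (integral\<^sup>L A h) = integral\<^sup>L A (\<lambda>y. Re (h y))" by (rule integral_Re[OF iA, symmetric])
    also have "\<dots> = (\<integral>x. d x * Re (h x) \<partial>M)" by (rule dint[OF reh])
    also have "\<dots> = (\<integral>x. Re (complex_of_real (d x) * h x) \<partial>M)" by simp
    also have "\<dots> = Re (\<integral>y. complex_of_real (d y) * h y \<partial>M)" by (rule integral_Re[OF iM])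
    finally show "Re (integral\<^sup>L A h) = Re (\<integral>y. complex_of_real (d y) * h y \<partial>M)" .
    have "Im (integral\<^sup>L A h) = integral\<^sup>L A (\<lambda>y. Im (h y))" by (rule integral_Im[OF iA, symmetric])
    also have "\<dots> = (\<integral>x. d x * Im (h x) \<partial>M)" by (rule dint[OF imh])
    also have "\<dots> = (\<integral>x. Im (complex_of_real (d x) * h x) \<partial>M)" by simp
    also have "\<dots> = Im (\<integral>y. complex_of_real (d y) * h y \<partial>M)" by (rule integral_Im[OF iM])
    finally show "Im (integral\<^sup>L A h) = Im (\<integral>y. complex_of_real (d y) * h y \<partial>M)" .
  qed
qed

lemma phi_bound:
  fixes ph :: "'a::metric_space \<Rightarrow> complex"
  assumes cpt: "compact (UNIV::'a set)" and c: "continuous_on UNIV ph" and s: "(SUP y. cmod (ph y)) = 1"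
  shows "cmod (ph y) \<le> 1"
proof -
  have "continuous_on UNIV (\<lambda>y. cmod (ph y))" using c by (intro continuous_intros)
  then have "bounded ((\<lambda>y. cmod (ph y)) ` UNIV)"
    by (rule compact_imp_bounded[OF compact_continuous_image[OF _ cpt]])
  then have "bdd_above ((\<lambda>y. cmod (ph y)) ` UNIV)" by (rule bounded_imp_bdd_above)
  then have "cmod (ph y) \<le> (SUP y. cmod (ph y))" by (rule cSUP_upper[OF UNIV_I])
  then show ?thesis using s by simp
qed

lemma fspan_cont:
  assumes "\<And>i. continuous_on UNIV (psi i)"
  shows "continuous_on UNIV (fspan psi N c)"
  unfolding fspan_def by (intro continuous_on_sum continuous_on_mult continuous_on_const assms)

lemma bounded_cont:
  assumes cpt: "compact (UNIV::'a::metric_space set)" and c: "continuous_on UNIV (f::'a \<Rightarrow> 'b::real_normed_vector)"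
  shows "\<exists>B. \<forall>y. norm (f y) \<le> B"
proof -
  have "bounded (f ` UNIV)" by (rule compact_imp_bounded[OF compact_continuous_image[OF c cpt]])
  then show ?thesis unfolding bounded_iff by blast
qed

lemma lim_over_R:
  assumes "strict_mono (R::nat \<Rightarrow> nat)"
  shows "(\<lambda>n. C / real (R n)) \<longlonglongrightarrow> 0"
  using LIMSEQ_subseq_LIMSEQ[OF lim_const_over_n[of C] assms] by (simp add: o_def)


theorem theorem7:
  fixes T Tinv :: "'a::metric_space \<Rightarrow> 'a"
    and psi :: "nat \<Rightarrow> 'a \<Rightarrow> complex"
    and x :: "nat \<Rightarrow> nat \<Rightarrow> 'a"
    and lam :: "nat \<Rightarrow> complex"
    and phi :: "nat \<Rightarrow> 'a \<Rightarrow> complex"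
  assumes compactM: "compact (UNIV :: 'a set)"
    and homeo: "homeomorphism UNIV UNIV T Tinv"
    and psi_cont: "\<And>i. continuous_on UNIV (psi i)"
    and traj: "\<And>N i. 1 \<le> N \<Longrightarrow> 1 \<le> i \<Longrightarrow> i \<le> N - 1 \<Longrightarrow> x N (Suc i) = T (x N i)"
    and gram_inv: "\<And>N. 1 \<le> N \<Longrightarrow> invertible_cmat N (gram psi (x N) N)"
    and lam_bdd: "Bseq lam"
    and eigen: "\<And>N. 1 \<le> N \<Longrightarrow> \<exists>c. phi N = fspan psi N c
                   \<and> edmd_op psi T (x N) N c = (\<lambda>y. lam N * phi N y)"
    and normalized: "\<And>N. 1 \<le> N \<Longrightarrow> (SUP y. cmod (phi N y)) = 1"
  shows "\<exists>r rho g mu l.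
     strict_mono r \<and> complex_borel_measure rho g \<and> sets mu = sets borel \<and> finite_measure mu \<and>
     (\<forall>f. continuous_on UNIV f \<longrightarrow>
        (\<lambda>i. emp_nu (x (r i)) (r i) (phi (r i)) f) \<longlonglongrightarrow> cbm_int rho g f) \<and>
     (\<forall>f. continuous_on UNIV f \<longrightarrow>
        (\<lambda>i. emp_mu (x (r i)) (r i) f) \<longlonglongrightarrow> (LINT y|mu. f y)) \<and>
     (\<lambda>i. lam (r i)) \<longlonglongrightarrow> l \<and>
     (\<forall>h. continuous_on UNIV h \<longrightarrow> cbm_int rho g (h \<circ> Tinv) = l * cbm_int rho g h) \<and>
     (\<forall>f::'a \<Rightarrow> complex. continuous_on UNIV f \<longrightarrow> (LINT y|mu. f (T y)) = (LINT y|mu. f y)) \<and>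
     (koopman_bounded mu T \<longrightarrow> (\<forall>Ks. koopman_adjoint mu T Ks \<longrightarrow>
        (\<forall>h. continuous_on UNIV h \<longrightarrow> cbm_int rho g (Ks h) = l * cbm_int rho g h))) \<and>
     (l \<noteq> 0 \<longrightarrow> (\<forall>h. continuous_on UNIV h \<longrightarrow> cbm_int rho g (h \<circ> T) = (1 / l) * cbm_int rho g h))"
proof -
  note cpt = compactM
  have Tc: "continuous_on UNIV T" and Tic: "continuous_on UNIV Tinv"
    and TiT: "\<And>y. Tinv (T y) = y" and TTi: "\<And>y. T (Tinv y) = y"
    using homeo unfolding homeomorphism_def by auto
  have "\<forall>N. \<exists>c. 1 \<le> N \<longrightarrow> phi N = fspan psi N c \<and> edmd_op psi T (x N) N c = (\<lambda>y. lam N * phi N y)"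
    using eigen by blast
  then obtain cc where cc: "\<forall>N. 1 \<le> N \<longrightarrow> phi N = fspan psi N (cc N) \<and>
      edmd_op psi T (x N) N (cc N) = (\<lambda>y. lam N * phi N y)"
    by (rule choice[THEN exE])
  have phic: "continuous_on UNIV (phi N)" if "1 \<le> N" for N
    using cc that fspan_cont[OF psi_cont, where N=N and c="cc N"] by simp
  have phib: "cmod (phi N y) \<le> 1" if "1 \<le> N" for N y
    by (rule phi_bound[OF cpt phic[OF that] normalized[OF that]])
  have phiT: "phi N (T (x N l)) = lam N * phi N (x N l)" if "1 \<le> N" "1 \<le> l" "l \<le> N" for N l
    using cc that by (intro edmd_step[OF that(1) gram_inv[OF that(1)]]) auto
  have phis: "phi N (x N (Suc l)) = lam N * phi N (x N l)" if "1 \<le> N" "1 \<le> l" "l \<le> N - 1" for N l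
    using traj[OF that] phiT[OF that(1,2)] that(3) by simp
  define p where "p = (\<lambda>n i. x n (Suc i))"
  define w0 where "w0 = (\<lambda>(n::nat) (i::nat). 1 / real n)"
  define wa where "wa = (\<lambda>n i. (1 + Re (phi n (p n i))) / (2 * real n))"
  define wb where "wb = (\<lambda>n i. (1 - Re (phi n (p n i))) / (2 * real n))"
  define wc where "wc = (\<lambda>n i. (1 + Im (phi n (p n i))) / (2 * real n))"
  define wd where "wd = (\<lambda>n i. (1 - Im (phi n (p n i))) / (2 * real n))"
  have ReIm: "\<bar>Re (phi n (p n i))\<bar> \<le> 1" "\<bar>Im (phi n (p n i))\<bar> \<le> 1" if "1 \<le> n" for n i
    using phib[OF that, of "p n i"] abs_Re_le_cmod abs_Im_le_cmod by (meson order_trans)+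
  have wgen: "0 \<le> (1 + a) / (2 * real n) \<and> 0 \<le> (1 - a) / (2 * real n) \<and>
      (1 + a) / (2 * real n) \<le> 1 / real n \<and> (1 - a) / (2 * real n) \<le> 1 / real n"
    if "1 \<le> n \<Longrightarrow> \<bar>a\<bar> \<le> 1" for a :: real and n :: nat
  proof (cases "n = 0")
    case True then show ?thesis by simp
  next
    case False
    then have n: "0 < real n" and a: "\<bar>a\<bar> \<le> 1" using that by auto
    have a1: "0 \<le> 1 + a" "0 \<le> 1 - a" "1 + a \<le> 2" "1 - a \<le> 2" using a by auto
    have d: "0 < 2 * real n" using n by simp
    have e: "2 / (2 * real n) = 1 / real n" using n by simp
    have "(1 + a) / (2 * real n) \<le> 2 / (2 * real n)" by (rule divide_right_mono[OF a1(3)]) (use d in simp)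
    moreover have "(1 - a) / (2 * real n) \<le> 2 / (2 * real n)" by (rule divide_right_mono[OF a1(4)]) (use d in simp)
    moreover have "0 \<le> (1 + a) / (2 * real n)" using a1(1) d by simp
    moreover have "0 \<le> (1 - a) / (2 * real n)" using a1(2) d by simp
    ultimately show ?thesis unfolding e by simp
  qed
  have w0pos: "\<And>n i. 0 \<le> w0 n i" unfolding w0_def by simp
  have wapos: "\<And>n i. 0 \<le> wa n i" unfolding wa_def using wgen ReIm by blast
  have wbpos: "\<And>n i. 0 \<le> wb n i" unfolding wb_def using wgen ReIm by blast
  have wcpos: "\<And>n i. 0 \<le> wc n i" unfolding wc_def using wgen ReIm by blast
  have wdpos: "\<And>n i. 0 \<le> wd n i" unfolding wd_def using wgen ReIm by blast
  have w0sum: "\<And>n. (\<Sum>i<n. w0 n i) \<le> 1" by (rule wsum_gen) (simp add: w0_def)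
  have wasum: "\<And>n. (\<Sum>i<n. wa n i) \<le> 1" by (rule wsum_gen) (unfold wa_def, use wgen ReIm in blast)
  have wbsum: "\<And>n. (\<Sum>i<n. wb n i) \<le> 1" by (rule wsum_gen) (unfold wb_def, use wgen ReIm in blast)
  have wcsum: "\<And>n. (\<Sum>i<n. wc n i) \<le> 1" by (rule wsum_gen) (unfold wc_def, use wgen ReIm in blast)
  have wdsum: "\<And>n. (\<Sum>i<n. wd n i) \<le> 1" by (rule wsum_gen) (unfold wd_def, use wgen ReIm in blast)
  have ab: "wa n i + wb n i = w0 n i" for n i
    unfolding wa_def wb_def w0_def by (cases "n = 0") (simp_all add: field_simps)
  have cd: "wc n i + wd n i = w0 n i" for n i
    unfolding wc_def wd_def w0_def by (cases "n = 0") (simp_all add: field_simps)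
  have sid: "strict_mono (id::nat \<Rightarrow> nat)" by (simp add: strict_mono_def)
  from G_CV[OF cpt w0pos w0sum sid, where p=p] obtain r1 M where
    r1: "strict_mono r1" and SM: "sets M = sets borel" and FM: "finite_measure M" and C0: "CV p w0 M (id \<circ> r1)"
    by blast
  define s1 where "s1 = id \<circ> r1"
  have s1: "strict_mono s1" unfolding s1_def using r1 by (simp add: strict_mono_def)
  from G_CV[OF cpt wapos wasum s1, where p=p] obtain r2 MA where
    r2: "strict_mono r2" and SMA: "sets MA = sets borel" and FMA: "finite_measure MA" and CA: "CV p wa MA (s1 \<circ> r2)"
    by blast
  define s2 where "s2 = s1 \<circ> r2"
  have s2: "strict_mono s2" unfolding s2_def using s1 r2 by (rule strict_mono_o)
  from G_CV[OF cpt wbpos wbsum s2, where p=p] obtain r3 MB where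
    r3: "strict_mono r3" and SMB: "sets MB = sets borel" and FMB: "finite_measure MB" and CB: "CV p wb MB (s2 \<circ> r3)"
    by blast
  define s3 where "s3 = s2 \<circ> r3"
  have s3: "strict_mono s3" unfolding s3_def using s2 r3 by (rule strict_mono_o)
  from G_CV[OF cpt wcpos wcsum s3, where p=p] obtain r4 MC where
    r4: "strict_mono r4" and SMC: "sets MC = sets borel" and FMC: "finite_measure MC" and CC: "CV p wc MC (s3 \<circ> r4)"
    by blast
  define s4 where "s4 = s3 \<circ> r4"
  have s4: "strict_mono s4" unfolding s4_def using s3 r4 by (rule strict_mono_o)
  from G_CV[OF cpt wdpos wdsum s4, where p=p] obtain r5 MD where
    r5: "strict_mono r5" and SMD: "sets MD = sets borel" and FMD: "finite_measure MD" and CD: "CV p wd MD (s4 \<circ> r5)"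
    by blast
  define s5 where "s5 = s4 \<circ> r5"
  have s5: "strict_mono s5" unfolding s5_def using s4 r5 by (rule strict_mono_o)
  obtain Bl where Bl: "0 < Bl" "\<And>n. norm (lam n) \<le> Bl" using lam_bdd by (rule BseqE) blast
  have "seq_compact (cball (0::complex) Bl)" by (rule compact_imp_seq_compact) simp
  moreover have "\<forall>n. lam (s5 n) \<in> cball 0 Bl" using Bl(2) by simp
  ultimately obtain l r6 where r6: "strict_mono r6" and lr6: "((\<lambda>n. lam (s5 n)) \<circ> r6) \<longlonglongrightarrow> l"
    by (rule seq_compactE)
  define R where "R = s5 \<circ> r6"
  have Rm: "strict_mono R" unfolding R_def using s5 r6 by (rule strict_mono_o)
  have lamR: "(\<lambda>n. lam (R n)) \<longlonglongrightarrow> l" using lr6 unfolding R_def by (simp add: o_def)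
  have C0R: "CV p w0 M R"
  proof -
    have "CV p w0 M s1" using C0 unfolding s1_def .
    then have "CV p w0 M s2" unfolding s2_def by (rule CV_sub[OF _ r2])
    then have "CV p w0 M s3" unfolding s3_def by (rule CV_sub[OF _ r3])
    then have "CV p w0 M s4" unfolding s4_def by (rule CV_sub[OF _ r4])
    then have "CV p w0 M s5" unfolding s5_def by (rule CV_sub[OF _ r5])
    then show ?thesis unfolding R_def by (rule CV_sub[OF _ r6])
  qed
  have CAR: "CV p wa MA R"
  proof -
    have "CV p wa MA s2" using CA unfolding s2_def .
    then have "CV p wa MA s3" unfolding s3_def by (rule CV_sub[OF _ r3])
    then have "CV p wa MA s4" unfolding s4_def by (rule CV_sub[OF _ r4])
    then have "CV p wa MA s5" unfolding s5_def by (rule CV_sub[OF _ r5])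
    then show ?thesis unfolding R_def by (rule CV_sub[OF _ r6])
  qed
  have CBR: "CV p wb MB R"
  proof -
    have "CV p wb MB s3" using CB unfolding s3_def .
    then have "CV p wb MB s4" unfolding s4_def by (rule CV_sub[OF _ r4])
    then have "CV p wb MB s5" unfolding s5_def by (rule CV_sub[OF _ r5])
    then show ?thesis unfolding R_def by (rule CV_sub[OF _ r6])
  qed
  have CCR: "CV p wc MC R"
  proof -
    have "CV p wc MC s4" using CC unfolding s4_def .
    then have "CV p wc MC s5" unfolding s5_def by (rule CV_sub[OF _ r5])
    then show ?thesis unfolding R_def by (rule CV_sub[OF _ r6])
  qed
  have CDR: "CV p wd MD R"
  proof -
    have "CV p wd MD s5" using CD unfolding s5_def .
    then show ?thesis unfolding R_def by (rule CV_sub[OF _ r6])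
  qed
  have relAB: "integral\<^sup>L MA f + integral\<^sup>L MB f = integral\<^sup>L M f" if fc: "continuous_on UNIV f" for f :: "'a \<Rightarrow> real"
  proof -
    have lA: "(\<lambda>n. \<Sum>i<R n. wa (R n) i * f (p (R n) i)) \<longlonglongrightarrow> integral\<^sup>L MA f"
      by (rule CAR[unfolded CV_def, rule_format, OF fc])
    have lB: "(\<lambda>n. \<Sum>i<R n. wb (R n) i * f (p (R n) i)) \<longlonglongrightarrow> integral\<^sup>L MB f"
      by (rule CBR[unfolded CV_def, rule_format, OF fc])
    have eq: "(\<Sum>i<k. wa n i * f (p n i)) + (\<Sum>i<k. wb n i * f (p n i)) = (\<Sum>i<k. w0 n i * f (p n i))" for n k
      by (simp add: sum.distrib[symmetric] ab[symmetric] distrib_right)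
    have "(\<lambda>n. \<Sum>i<R n. w0 (R n) i * f (p (R n) i)) \<longlonglongrightarrow> integral\<^sup>L MA f + integral\<^sup>L MB f"
      using tendsto_add[OF lA lB] unfolding eq .
    from CV_unique_real[OF C0R fc this] show ?thesis by simp
  qed
  have relCD: "integral\<^sup>L MC f + integral\<^sup>L MD f = integral\<^sup>L M f" if fc: "continuous_on UNIV f" for f :: "'a \<Rightarrow> real"
  proof -
    have lA: "(\<lambda>n. \<Sum>i<R n. wc (R n) i * f (p (R n) i)) \<longlonglongrightarrow> integral\<^sup>L MC f"
      by (rule CCR[unfolded CV_def, rule_format, OF fc])
    have lB: "(\<lambda>n. \<Sum>i<R n. wd (R n) i * f (p (R n) i)) \<longlonglongrightarrow> integral\<^sup>L MD f"
      by (rule CDR[unfolded CV_def, rule_format, OF fc])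
    have eq: "(\<Sum>i<k. wc n i * f (p n i)) + (\<Sum>i<k. wd n i * f (p n i)) = (\<Sum>i<k. w0 n i * f (p n i))" for n k
      by (simp add: sum.distrib[symmetric] cd[symmetric] distrib_right)
    have "(\<lambda>n. \<Sum>i<R n. w0 (R n) i * f (p (R n) i)) \<longlonglongrightarrow> integral\<^sup>L MC f + integral\<^sup>L MD f"
      using tendsto_add[OF lA lB] unfolding eq .
    from CV_unique_real[OF C0R fc this] show ?thesis by simp
  qed
  have relABc: "integral\<^sup>L MA h + integral\<^sup>L MB h = integral\<^sup>L M h" if hc: "continuous_on UNIV h" for h :: "'a \<Rightarrow> complex"
  proof -
    have lA: "(\<lambda>n. \<Sum>i<R n. complex_of_real (wa (R n) i) * h (p (R n) i)) \<longlonglongrightarrow> integral\<^sup>L MA h"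
      by (rule CV_complex[OF cpt SMA FMA CAR hc])
    have lB: "(\<lambda>n. \<Sum>i<R n. complex_of_real (wb (R n) i) * h (p (R n) i)) \<longlonglongrightarrow> integral\<^sup>L MB h"
      by (rule CV_complex[OF cpt SMB FMB CBR hc])
    have l0: "(\<lambda>n. \<Sum>i<R n. complex_of_real (w0 (R n) i) * h (p (R n) i)) \<longlonglongrightarrow> integral\<^sup>L M h"
      by (rule CV_complex[OF cpt SM FM C0R hc])
    have eq: "(\<Sum>i<k. complex_of_real (wa n i) * h (p n i)) + (\<Sum>i<k. complex_of_real (wb n i) * h (p n i))
        = (\<Sum>i<k. complex_of_real (w0 n i) * h (p n i))" for n k
      by (simp add: sum.distrib[symmetric] ab[symmetric] distrib_right)
    have "(\<lambda>n. \<Sum>i<R n. complex_of_real (w0 (R n) i) * h (p (R n) i)) \<longlonglongrightarrow> integral\<^sup>L MA h + integral\<^sup>L MB h"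
      using tendsto_add[OF lA lB] unfolding eq .
    from LIMSEQ_unique[OF this l0] show ?thesis .
  qed
  have relCDc: "integral\<^sup>L MC h + integral\<^sup>L MD h = integral\<^sup>L M h" if hc: "continuous_on UNIV h" for h :: "'a \<Rightarrow> complex"
  proof -
    have lA: "(\<lambda>n. \<Sum>i<R n. complex_of_real (wc (R n) i) * h (p (R n) i)) \<longlonglongrightarrow> integral\<^sup>L MC h"
      by (rule CV_complex[OF cpt SMC FMC CCR hc])
    have lB: "(\<lambda>n. \<Sum>i<R n. complex_of_real (wd (R n) i) * h (p (R n) i)) \<longlonglongrightarrow> integral\<^sup>L MD h"
      by (rule CV_complex[OF cpt SMD FMD CDR hc])
    have l0: "(\<lambda>n. \<Sum>i<R n. complex_of_real (w0 (R n) i) * h (p (R n) i)) \<longlonglongrightarrow> integral\<^sup>L M h"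
      by (rule CV_complex[OF cpt SM FM C0R hc])
    have eq: "(\<Sum>i<k. complex_of_real (wc n i) * h (p n i)) + (\<Sum>i<k. complex_of_real (wd n i) * h (p n i))
        = (\<Sum>i<k. complex_of_real (w0 n i) * h (p n i))" for n k
      by (simp add: sum.distrib[symmetric] cd[symmetric] distrib_right)
    have "(\<lambda>n. \<Sum>i<R n. complex_of_real (w0 (R n) i) * h (p (R n) i)) \<longlonglongrightarrow> integral\<^sup>L MC h + integral\<^sup>L MD h"
      using tendsto_add[OF lA lB] unfolding eq .
    from LIMSEQ_unique[OF this l0] show ?thesis .
  qed
  have leA: "measure MA X \<le> measure M X" if "X \<in> sets borel" for X
    using meas_add_eq[OF SMA SMB SM FMA FMB FM relAB that] measure_nonneg[of MB X] by linarith
  have leC: "measure MC X \<le> measure M X" if "X \<in> sets borel" for X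
    using meas_add_eq[OF SMC SMD SM FMC FMD FM relCD that] measure_nonneg[of MD X] by linarith
  from density01[OF SM SMA FM FMA leA] obtain d1 where
    d1m: "d1 \<in> borel_measurable borel" and d1b: "\<forall>x. 0 \<le> d1 x \<and> d1 x \<le> 1"
    and d1i: "\<forall>h::'a \<Rightarrow> real. h \<in> borel_measurable borel \<longrightarrow> integral\<^sup>L MA h = (\<integral>x. d1 x * h x \<partial>M)"
    by blast
  from density01[OF SM SMC FM FMC leC] obtain d2 where
    d2m: "d2 \<in> borel_measurable borel" and d2b: "\<forall>x. 0 \<le> d2 x \<and> d2 x \<le> 1"
    and d2i: "\<forall>h::'a \<Rightarrow> real. h \<in> borel_measurable borel \<longrightarrow> integral\<^sup>L MC h = (\<integral>x. d2 x * h x \<partial>M)"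
    by blast
  have hbnd: "\<exists>B. \<forall>y. norm (h y) \<le> B" if "continuous_on UNIV h" for h :: "'a \<Rightarrow> complex"
    by (rule bounded_cont[OF cpt that])
  have hmeas: "h \<in> borel_measurable borel" if "continuous_on UNIV h" for h :: "'a \<Rightarrow> complex"
    by (rule borel_measurable_continuous_onI[OF that])
  have hmeasM: "h \<in> borel_measurable M" if "continuous_on UNIV h" for h :: "'a \<Rightarrow> complex"
    using hmeas[OF that] unfolding measurable_cong_sets[OF SM refl] .
  have d1mM: "d1 \<in> borel_measurable M" using d1m unfolding measurable_cong_sets[OF SM refl] .
  have d2mM: "d2 \<in> borel_measurable M" using d2m unfolding measurable_cong_sets[OF SM refl] .
  have dA: "integral\<^sup>L MA h = (\<integral>y. complex_of_real (d1 y) * h y \<partial>M)" if hc: "continuous_on UNIV h" for h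
  proof -
    obtain B where B: "\<forall>y. norm (h y) \<le> B" using hbnd[OF hc] by blast
    show ?thesis
      by (rule dens_complex[OF SM SMA FM FMA d1m _ _ hmeas[OF hc], of B]) (use d1b d1i B in auto)
  qed
  have dC: "integral\<^sup>L MC h = (\<integral>y. complex_of_real (d2 y) * h y \<partial>M)" if hc: "continuous_on UNIV h" for h
  proof -
    obtain B where B: "\<forall>y. norm (h y) \<le> B" using hbnd[OF hc] by blast
    show ?thesis
      by (rule dens_complex[OF SM SMC FM FMC d2m _ _ hmeas[OF hc], of B]) (use d2b d2i B in auto)
  qed
  define g where "g = (\<lambda>y. complex_of_real (2 * d1 y - 1) + \<i> * complex_of_real (2 * d2 y - 1))"
  have gm: "g \<in> borel_measurable M" unfolding g_def using d1mM d2mM by measurable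
  have gb: "norm (g y) \<le> 2" for y
  proof -
    have "norm (g y) \<le> \<bar>Re (g y)\<bar> + \<bar>Im (g y)\<bar>" by (rule cmod_le)
    moreover have "\<bar>Re (g y)\<bar> \<le> 1" "\<bar>Im (g y)\<bar> \<le> 1" using d1b[rule_format, of y] d2b[rule_format, of y] unfolding g_def by auto
    ultimately show ?thesis by simp
  qed
  have gint: "integrable M g" by (rule bnd_int[OF FM gm gb])
  have NU: "(integral\<^sup>L MA h - integral\<^sup>L MB h) + \<i> * (integral\<^sup>L MC h - integral\<^sup>L MD h) = cbm_int M g h"
    if hc: "continuous_on UNIV h" for h
  proof -
    obtain B where B: "\<forall>y. norm (h y) \<le> B" using hbnd[OF hc] by blast
    have hM: "h \<in> borel_measurable M" by (rule hmeasM[OF hc])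
    have i0: "integrable M h" by (rule bnd_int[OF FM hM]) (use B in blast)
    have m1: "(\<lambda>y. complex_of_real (d1 y) * h y) \<in> borel_measurable M" using d1mM hM by measurable
    have m2: "(\<lambda>y. complex_of_real (d2 y) * h y) \<in> borel_measurable M" using d2mM hM by measurable
    have b1: "norm (complex_of_real (d1 y) * h y) \<le> B" for y
    proof -
      have "norm (complex_of_real (d1 y) * h y) = d1 y * norm (h y)" using d1b by (simp add: norm_mult)
      also have "\<dots> \<le> 1 * B" using d1b B by (intro mult_mono) auto
      finally show ?thesis by simp
    qed
    have b2: "norm (complex_of_real (d2 y) * h y) \<le> B" for y
    proof -
      have "norm (complex_of_real (d2 y) * h y) = d2 y * norm (h y)" using d2b by (simp add: norm_mult)
      also have "\<dots> \<le> 1 * B" using d2b B by (intro mult_mono) auto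
      finally show ?thesis by simp
    qed
    have i1: "integrable M (\<lambda>y. complex_of_real (d1 y) * h y)" by (rule bnd_int[OF FM m1 b1])
    have i2: "integrable M (\<lambda>y. complex_of_real (d2 y) * h y)" by (rule bnd_int[OF FM m2 b2])
    define I0 where "I0 = integral\<^sup>L M h"
    define I1 where "I1 = (\<integral>y. complex_of_real (d1 y) * h y \<partial>M)"
    define I2 where "I2 = (\<integral>y. complex_of_real (d2 y) * h y \<partial>M)"
    have iA: "integrable M (\<lambda>y. 2 * (complex_of_real (d1 y) * h y) - h y)"
      by (intro Bochner_Integration.integrable_diff integrable_mult_right i1 i0)
    have iB: "integrable M (\<lambda>y. \<i> * (2 * (complex_of_real (d2 y) * h y) - h y))"
      by (intro integrable_mult_right Bochner_Integration.integrable_diff i2 i0)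
    have "cbm_int M g h = (\<integral>y. (2 * (complex_of_real (d1 y) * h y) - h y)
        + \<i> * (2 * (complex_of_real (d2 y) * h y) - h y) \<partial>M)"
      unfolding cbm_int_def g_def by (rule Bochner_Integration.integral_cong) (simp_all add: algebra_simps)
    also have "\<dots> = (\<integral>y. 2 * (complex_of_real (d1 y) * h y) - h y \<partial>M)
        + (\<integral>y. \<i> * (2 * (complex_of_real (d2 y) * h y) - h y) \<partial>M)"
      by (rule Bochner_Integration.integral_add[OF iA iB])
    also have "(\<integral>y. 2 * (complex_of_real (d1 y) * h y) - h y \<partial>M) = 2 * I1 - I0"
      unfolding I0_def I1_def
      by (subst Bochner_Integration.integral_diff[OF integrable_mult_right[OF i1] i0]) (simp add: integral_mult_right_zero)
    also have "(\<integral>y. \<i> * (2 * (complex_of_real (d2 y) * h y) - h y) \<partial>M) = \<i> * (2 * I2 - I0)"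
      unfolding I0_def I2_def integral_mult_right_zero
      by (subst Bochner_Integration.integral_diff[OF integrable_mult_right[OF i2] i0]) (simp add: integral_mult_right_zero)
    finally have c: "cbm_int M g h = 2 * I1 - I0 + \<i> * (2 * I2 - I0)" .
    have eB: "integral\<^sup>L MB h = I0 - I1" using relABc[OF hc] dA[OF hc] unfolding I0_def I1_def by (simp add: algebra_simps)
    have eD: "integral\<^sup>L MD h = I0 - I2" using relCDc[OF hc] dC[OF hc] unfolding I0_def I2_def by (simp add: algebra_simps)
    have eA: "integral\<^sup>L MA h = I1" using dA[OF hc] unfolding I1_def .
    have eC: "integral\<^sup>L MC h = I2" using dC[OF hc] unfolding I2_def .
    show ?thesis unfolding c eA eB eC eD by (simp add: algebra_simps)
  qed
  define EW where "EW = (\<lambda>(w::nat \<Rightarrow> nat \<Rightarrow> real) (h::'a \<Rightarrow> complex) N. \<Sum>i<N. complex_of_real (w N i) * h (p N i))"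
  have nu_id: "emp_nu (x N) N (phi N) h = (EW wa h N - EW wb h N) + \<i> * (EW wc h N - EW wd h N)" for N h
  proof -
    have "emp_nu (x N) N (phi N) h = (\<Sum>i<N. (phi N (p N i) / complex_of_real (real N)) * h (p N i))"
      unfolding emp_nu_def sum_1N p_def sum_distrib_left
      by (rule sum.cong) (simp_all add: divide_inverse mult_ac)
    also have "\<dots> = (\<Sum>i<N. (complex_of_real (wa N i) - complex_of_real (wb N i)
        + \<i> * (complex_of_real (wc N i) - complex_of_real (wd N i))) * h (p N i))"
      unfolding wa_def wb_def wc_def wd_def coef_id ..
    also have "\<dots> = (EW wa h N - EW wb h N) + \<i> * (EW wc h N - EW wd h N)"
      unfolding EW_def by (simp add: algebra_simps sum.distrib sum_subtractf sum_distrib_left)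
    finally show ?thesis .
  qed
  have mu_id: "emp_mu (x N) N f = EW w0 f N" for N f
    unfolding emp_mu_def EW_def sum_1N p_def sum_distrib_left w0_def
    by (rule sum.cong) simp_all
  have K: "(\<lambda>n. emp_nu (x (R n)) (R n) (phi (R n)) h) \<longlonglongrightarrow> cbm_int M g h"
    if hc: "continuous_on UNIV h" for h
  proof -
    have lA: "(\<lambda>n. EW wa h (R n)) \<longlonglongrightarrow> integral\<^sup>L MA h"
      unfolding EW_def by (rule CV_complex[OF cpt SMA FMA CAR hc])
    have lB: "(\<lambda>n. EW wb h (R n)) \<longlonglongrightarrow> integral\<^sup>L MB h"
      unfolding EW_def by (rule CV_complex[OF cpt SMB FMB CBR hc])
    have lC: "(\<lambda>n. EW wc h (R n)) \<longlonglongrightarrow> integral\<^sup>L MC h"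
      unfolding EW_def by (rule CV_complex[OF cpt SMC FMC CCR hc])
    have lD: "(\<lambda>n. EW wd h (R n)) \<longlonglongrightarrow> integral\<^sup>L MD h"
      unfolding EW_def by (rule CV_complex[OF cpt SMD FMD CDR hc])
    have "(\<lambda>n. (EW wa h (R n) - EW wb h (R n)) + \<i> * (EW wc h (R n) - EW wd h (R n)))
        \<longlonglongrightarrow> (integral\<^sup>L MA h - integral\<^sup>L MB h) + \<i> * (integral\<^sup>L MC h - integral\<^sup>L MD h)"
      by (intro tendsto_add tendsto_diff tendsto_mult tendsto_const lA lB lC lD)
    then show ?thesis unfolding nu_id NU[OF hc] .
  qed
  have KM: "(\<lambda>n. emp_mu (x (R n)) (R n) f) \<longlonglongrightarrow> integral\<^sup>L M f"
    if fc: "continuous_on UNIV f" for f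
    unfolding mu_id EW_def by (rule CV_complex[OF cpt SM FM C0R fc])
  have EIG: "cbm_int M g (h \<circ> Tinv) = l * cbm_int M g h" if hc: "continuous_on UNIV h" for h
  proof -
    have hTc: "continuous_on UNIV (h \<circ> Tinv)"
      using continuous_on_compose[OF Tic continuous_on_subset[OF hc subset_UNIV]] .
    obtain Bh where Bh: "\<forall>y. norm (h y) \<le> Bh" using hbnd[OF hc] by blast
    have "norm (h undefined) \<le> Bh" using Bh by simp
    then have Bh0: "0 \<le> Bh" using norm_ge_zero[of "h undefined"] by linarith
    define D where "D = (\<lambda>n. emp_nu (x (R n)) (R n) (phi (R n)) (h \<circ> Tinv)
        - lam (R n) * emp_nu (x (R n)) (R n) (phi (R n)) h)"
    have lim1: "D \<longlonglongrightarrow> cbm_int M g (h \<circ> Tinv) - l * cbm_int M g h"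
      unfolding D_def by (intro tendsto_diff tendsto_mult K hTc hc lamR)
    have bnd: "norm (D n) \<le> (Bh + Bl * Bh) / real (R n)" for n
    proof (cases "R n = 0")
      case True then show ?thesis unfolding D_def by (simp add: emp_nu_def)
    next
      case False
      define N where "N = R n"
      have N: "1 \<le> N" using False unfolding N_def by simp
      have eq: "D n = (1 / of_nat N) * (h (Tinv (x N 1)) * phi N (x N 1) - lam N * (h (x N N) * phi N (x N N)))"
        unfolding D_def N_def[symmetric]
        by (rule nu_shift[where xs="x N" and T=T and Tinv=Tinv and ph="phi N" and lam="lam N" and h=h,
              OF N traj[OF N] TiT phis[OF N]])
      have n1: "norm (h (Tinv (x N 1)) * phi N (x N 1)) \<le> Bh"
      proof -
        have "norm (h (Tinv (x N 1)) * phi N (x N 1)) = norm (h (Tinv (x N 1))) * norm (phi N (x N 1))"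
          by (rule norm_mult)
        also have "\<dots> \<le> Bh * 1" using Bh phib[OF N] Bh0 by (intro mult_mono) auto
        finally show ?thesis by simp
      qed
      have n2: "norm (lam N * (h (x N N) * phi N (x N N))) \<le> Bl * Bh"
      proof -
        have "norm (lam N * (h (x N N) * phi N (x N N))) = norm (lam N) * (norm (h (x N N)) * norm (phi N (x N N)))"
          by (simp add: norm_mult)
        also have "\<dots> \<le> Bl * (Bh * 1)" using Bh phib[OF N] Bl Bh0 by (intro mult_mono) auto
        finally show ?thesis by simp
      qed
      have "norm (h (Tinv (x N 1)) * phi N (x N 1) - lam N * (h (x N N) * phi N (x N N))) \<le> Bh + Bl * Bh"
        using norm_triangle_ineq4[of "h (Tinv (x N 1)) * phi N (x N 1)" "lam N * (h (x N N) * phi N (x N N))"] n1 n2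
        by simp
      then have "norm (D n) \<le> (1 / real N) * (Bh + Bl * Bh)"
        unfolding eq norm_mult by (simp add: norm_divide divide_right_mono)
      then show ?thesis unfolding N_def by simp
    qed
    have lim2: "D \<longlonglongrightarrow> 0"
      by (rule Lim_null_comparison[OF _ lim_over_R[OF Rm, where C="Bh + Bl * Bh"]])
         (rule always_eventually, rule allI, rule bnd)
    have "cbm_int M g (h \<circ> Tinv) - l * cbm_int M g h = 0" using LIMSEQ_unique[OF lim1 lim2] .
    then show ?thesis by simp
  qed
  have INVr: "(\<integral>y. f (T y) \<partial>M) = integral\<^sup>L M f" if fc: "continuous_on UNIV f" for f :: "'a \<Rightarrow> real"
  proof -
    have fTc: "continuous_on UNIV (\<lambda>y. f (T y))"
      using continuous_on_compose[OF Tc continuous_on_subset[OF fc subset_UNIV]] by (simp add: o_def)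
    obtain Bf where Bf: "\<forall>y. norm (f y) \<le> Bf" using bounded_cont[OF cpt fc] by blast
    have l1: "(\<lambda>n. \<Sum>i<R n. w0 (R n) i * f (T (p (R n) i))) \<longlonglongrightarrow> (\<integral>y. f (T y) \<partial>M)"
      by (rule C0R[unfolded CV_def, rule_format, OF fTc])
    have l2: "(\<lambda>n. \<Sum>i<R n. w0 (R n) i * f (p (R n) i)) \<longlonglongrightarrow> integral\<^sup>L M f"
      by (rule C0R[unfolded CV_def, rule_format, OF fc])
    define D where "D = (\<lambda>n. (\<Sum>i<R n. w0 (R n) i * f (T (p (R n) i))) - (\<Sum>i<R n. w0 (R n) i * f (p (R n) i)))"
    have lim1: "D \<longlonglongrightarrow> (\<integral>y. f (T y) \<partial>M) - integral\<^sup>L M f" unfolding D_def by (rule tendsto_diff[OF l1 l2])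
    have bnd: "norm (D n) \<le> (2 * Bf) / real (R n)" for n
    proof (cases "R n = 0")
      case True then show ?thesis unfolding D_def by simp
    next
      case False
      define N where "N = R n"
      have N: "1 \<le> N" using False unfolding N_def by simp
      have eq: "D n = (1 / real N) * (f (T (x N N)) - f (x N 1))"
        unfolding D_def N_def[symmetric] w0_def p_def by (rule mu_shift[where xs="x N" and T=T and f=f, OF N traj[OF N]])
      have "\<bar>f (T (x N N)) - f (x N 1)\<bar> \<le> 2 * Bf" using Bf[rule_format, of "T (x N N)"] Bf[rule_format, of "x N 1"] by simp
      then have "norm (D n) \<le> (1 / real N) * (2 * Bf)" unfolding eq using N
        by (simp add: abs_mult divide_right_mono)
      then show ?thesis unfolding N_def by simp
    qed
    have lim2: "D \<longlonglongrightarrow> 0"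
      by (rule Lim_null_comparison[OF _ lim_over_R[OF Rm, where C="2 * Bf"]])
         (rule always_eventually, rule allI, rule bnd)
    have "(\<integral>y. f (T y) \<partial>M) - integral\<^sup>L M f = 0" using LIMSEQ_unique[OF lim1 lim2] .
    then show ?thesis by simp
  qed
  have distT: "distr M borel T = M" by (rule inv_measure[OF SM FM Tc INVr])
  have Tm: "T \<in> M \<rightarrow>\<^sub>M borel"
    unfolding measurable_cong_sets[OF SM refl] by (rule borel_measurable_continuous_onI[OF Tc])
  have INVc: "(\<integral>y. F (T y) \<partial>M) = integral\<^sup>L M F" if Fm: "F \<in> borel_measurable borel" for F :: "'a \<Rightarrow> complex"
  proof -
    have "integral\<^sup>L (distr M borel T) F = (\<integral>y. F (T y) \<partial>M)" by (rule integral_distr[OF Tm Fm])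
    then show ?thesis using distT by simp
  qed
  have gmb: "g \<in> borel_measurable borel" using gm unfolding measurable_cong_sets[OF SM refl] .
  have KOOP: "cbm_int M g (Ks h) = l * cbm_int M g h"
    if adj: "koopman_adjoint M T Ks" and hc: "continuous_on UNIV h" for Ks h
  proof -
    obtain Bh where Bh: "\<forall>y. norm (h y) \<le> Bh" using hbnd[OF hc] by blast
    have hM: "h \<in> borel_measurable M" by (rule hmeasM[OF hc])
    have L2h: "L2 M h"
      unfolding L2_def
    proof
      show "h \<in> borel_measurable M" by (rule hM)
      have m: "(\<lambda>y. (cmod (h y))\<^sup>2) \<in> borel_measurable M" using hM by measurable
      have "norm ((cmod (h y))\<^sup>2) \<le> Bh\<^sup>2" for y
        using Bh[rule_format, of y] by (simp add: abs_le_square_iff power_mono)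
      then show "integrable M (\<lambda>y. (cmod (h y))\<^sup>2)" by (rule bnd_int[OF FM m])
    qed
    have cc: "(\<lambda>z::complex. cnj z) \<in> borel_measurable borel"
      by (rule borel_measurable_continuous_onI) (intro continuous_intros)
    have cgM: "(\<lambda>y. cnj (g y)) \<in> borel_measurable M" using measurable_compose[OF gm cc] by simp
    have L2g: "L2 M (\<lambda>y. cnj (g y))"
      unfolding L2_def
    proof
      show "(\<lambda>y. cnj (g y)) \<in> borel_measurable M" by (rule cgM)
      have m: "(\<lambda>y. (cmod (cnj (g y)))\<^sup>2) \<in> borel_measurable M" using cgM by measurable
      have "norm ((cmod (cnj (g y)))\<^sup>2) \<le> 2\<^sup>2" for y
        using power_mono[OF gb[of y] norm_ge_zero, of 2] by simp
      then show "integrable M (\<lambda>y. (cmod (cnj (g y)))\<^sup>2)" by (rule bnd_int[OF FM m])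
    qed
    have "\<forall>f g. L2 M f \<longrightarrow> L2 M g \<longrightarrow>
        (LINT y|M. f (T y) * cnj (g y)) = (LINT y|M. f y * cnj (Ks g y))"
      using adj unfolding koopman_adjoint_def by blast
    then have a: "(LINT y|M. cnj (g (T y)) * cnj (h y)) = (LINT y|M. cnj (g y) * cnj (Ks h y))"
      using L2g L2h by blast
    have c1: "cnj (LINT y|M. cnj (g (T y)) * cnj (h y)) = (LINT y|M. g (T y) * h y)"
      by (subst Bochner_Integration.integral_cnj[symmetric]) simp
    have c2: "cnj (LINT y|M. cnj (g y) * cnj (Ks h y)) = (LINT y|M. g y * Ks h y)"
      by (subst Bochner_Integration.integral_cnj[symmetric]) simp
    have "cbm_int M g (Ks h) = (LINT y|M. g y * Ks h y)"
      unfolding cbm_int_def by (simp add: mult.commute)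
    also have "\<dots> = (LINT y|M. g (T y) * h y)" using a c1 c2 by simp
    also have "\<dots> = (LINT y|M. (\<lambda>z. g z * h (Tinv z)) (T y))" by (simp add: TiT)
    also have "\<dots> = (LINT z|M. g z * h (Tinv z))"
    proof (rule INVc)
      have "h \<circ> Tinv \<in> borel_measurable borel"
        by (rule borel_measurable_continuous_onI)
           (rule continuous_on_compose[OF Tic continuous_on_subset[OF hc subset_UNIV]])
      then show "(\<lambda>z. g z * h (Tinv z)) \<in> borel_measurable borel" using gmb by (simp add: o_def)
    qed
    also have "\<dots> = cbm_int M g (h \<circ> Tinv)" unfolding cbm_int_def by (simp add: mult.commute)
    also have "\<dots> = l * cbm_int M g h" by (rule EIG[OF hc])
    finally show ?thesis .
  qed
  have INV1: "cbm_int M g (h \<circ> T) = (1 / l) * cbm_int M g h"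
    if l0: "l \<noteq> 0" and hc: "continuous_on UNIV h" for h
  proof -
    have hTc: "continuous_on UNIV (h \<circ> T)"
      by (rule continuous_on_compose[OF Tc continuous_on_subset[OF hc subset_UNIV]])
    have "(h \<circ> T) \<circ> Tinv = h" by (rule ext) (simp add: TTi)
    then have "cbm_int M g h = l * cbm_int M g (h \<circ> T)" using EIG[OF hTc] by simp
    then show ?thesis using l0 by simp
  qed
  have CBM: "complex_borel_measure M g"
    unfolding complex_borel_measure_def using SM FM gint by simp
  show ?thesis
  proof (intro exI[of _ R] exI[of _ M] exI[of _ g] exI[of _ M] exI[of _ l] conjI allI impI)
    show "strict_mono R" by (rule Rm)
    show "complex_borel_measure M g" by (rule CBM)
    show "sets M = sets borel" by (rule SM)
    show "finite_measure M" by (rule FM)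
    show "(\<lambda>i. lam (R i)) \<longlonglongrightarrow> l" by (rule lamR)
  next
    fix f :: "'a \<Rightarrow> complex" assume "continuous_on UNIV f"
    then show "(\<lambda>i. emp_nu (x (R i)) (R i) (phi (R i)) f) \<longlonglongrightarrow> cbm_int M g f" by (rule K)
  next
    fix f :: "'a \<Rightarrow> complex" assume "continuous_on UNIV f"
    then show "(\<lambda>i. emp_mu (x (R i)) (R i) f) \<longlonglongrightarrow> (LINT y|M. f y)" by (rule KM)
  next
    fix h :: "'a \<Rightarrow> complex" assume "continuous_on UNIV h"
    then show "cbm_int M g (h \<circ> Tinv) = l * cbm_int M g h" by (rule EIG)
  next
    fix f :: "'a \<Rightarrow> complex" assume "continuous_on UNIV f"
    then show "(LINT y|M. f (T y)) = (LINT y|M. f y)" by (intro INVc hmeas)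
  next
    fix Ks :: "('a \<Rightarrow> complex) \<Rightarrow> 'a \<Rightarrow> complex" and h :: "'a \<Rightarrow> complex"
    assume "koopman_bounded M T" "koopman_adjoint M T Ks" "continuous_on UNIV h"
    then show "cbm_int M g (Ks h) = l * cbm_int M g h" using KOOP by blast
  next
    fix h :: "'a \<Rightarrow> complex" assume "l \<noteq> 0" "continuous_on UNIV h"
    then show "cbm_int M g (h \<circ> T) = 1 / l * cbm_int M g h" by (rule INV1)
  qed
qed


end
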